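(* There is an absolute constant $c$ such that the following holds. Let $\mathbf A\in\mathbb R^{m\times n}$, let $\lambda_1\ge\lambda_2\ge\dots\ge\lambda_n$ be the eigenvalues of $\mathbf A^\top\mathbf A$, let $0<c_1\le c_2$ and $\gamma=c_2/c_1$, let $k\in\{1,\dots,n-1\}$ and $S\sim k\text{-}\mathrm{DPP}(\mathbf A^\top\mathbf A)$. 1. (Polynomial decay) If $p>1$ and $c_1i^{-p}\le\lambda_i\le c_2 i^{-p}$ for all $i$, then $\frac{\mathbb E[\mathrm{Er}_{\mathbf A}(S)]}{\mathrm{OPT}_k}\le c\gamma p$. 2. (Exponential decay) If $\delta\in(0,1)$ and $c_1(1-\delta)^i\le\lambda_i\le c_2(1-\delta)^i$ for all $i$, then $\frac{\mathbb E[\mathrm{Er}_{\mathbf A}(S)]}{\mathrm{OPT}_k}\le c\gamma(1+\delta k)$.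
   Context: For $\mathbf A\in\mathbb R^{m\times n}$ with columns $\mathbf a_1,\dots,\mathbf a_n$ and $S\subseteq\{1,\dots,n\}$, $\mathbf P_S$ denotes the orthogonal projection onto $\mathrm{span}\{\mathbf a_i:i\in S\}$ and $\mathrm{Er}_{\mathbf A}(S)=\|\mathbf A-\mathbf P_S\mathbf A\|_F^2$. $\mathrm{OPT}_k=\min_{\mathrm{rank}(\mathbf B)=k}\|\mathbf A-\mathbf B\|_F^2=\sum_{i>k}\lambda_i$. $S\sim k\text{-}\mathrm{DPP}(\mathbf A^\top\mathbf A)$ denotes the distribution over subsets $S\subseteq\{1,\dots,n\}$ with $|S|=k$ and $\Pr(S)\propto\det(\mathbf A_S^\top\mathbf A_S)$, where $\mathbf A_S$ is the submatrix of columns indexed by $S$. *)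

theory Defs
  imports Jordan_Normal_Form.Char_Poly Jordan_Normal_Form.DL_Submatrix
begin

(* Columns of A : real mat (A \<in> carrier_mat m n) are indexed 0..n-1. *)

definition cols_sub :: "real mat \<Rightarrow> nat set \<Rightarrow> real mat" where
  "cols_sub A S = submatrix A {..<dim_row A} S"

definition col_span :: "real mat \<Rightarrow> nat set \<Rightarrow> real vec set" where
  "col_span A S = {cols_sub A S *\<^sub>v x | x. x \<in> carrier_vec (dim_col (cols_sub A S))}"

definition orth_proj :: "nat \<Rightarrow> real vec set \<Rightarrow> real mat" where
  "orth_proj m V = (THE P. P \<in> carrier_mat m m \<and> P * P = P \<and> transpose_mat P = P
      \<and> {P *\<^sub>v v | v. v \<in> carrier_vec m} = V)"

definition proj_S :: "real mat \<Rightarrow> nat set \<Rightarrow> real mat" where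
  "proj_S A S = orth_proj (dim_row A) (col_span A S)"

definition frob_sq :: "real mat \<Rightarrow> real" where
  "frob_sq B = (\<Sum>i<dim_row B. \<Sum>j<dim_col B. (B $$ (i, j))\<^sup>2)"

definition Er :: "real mat \<Rightarrow> nat set \<Rightarrow> real" where
  "Er A S = frob_sq (A - proj_S A S * A)"

definition ksubsets :: "nat \<Rightarrow> nat \<Rightarrow> nat set set" where
  "ksubsets n k = {S. S \<subseteq> {..<n} \<and> card S = k}"

definition dpp_weight :: "real mat \<Rightarrow> nat set \<Rightarrow> real" where
  "dpp_weight A S = det (transpose_mat (cols_sub A S) * cols_sub A S)"

definition kDPP_expect :: "real mat \<Rightarrow> nat \<Rightarrow> (nat set \<Rightarrow> real) \<Rightarrow> real" where
  "kDPP_expect A k f =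
     (\<Sum>S\<in>ksubsets (dim_col A) k. dpp_weight A S * f S) /
     (\<Sum>S\<in>ksubsets (dim_col A) k. dpp_weight A S)"

definition is_sorted_eigs :: "real mat \<Rightarrow> (nat \<Rightarrow> real) \<Rightarrow> bool" where
  "is_sorted_eigs A lam \<longleftrightarrow>
     (\<forall>i j. 1 \<le> i \<longrightarrow> i \<le> j \<longrightarrow> j \<le> dim_col A \<longrightarrow> lam j \<le> lam i) \<and>
     mset (map lam [1..<dim_col A + 1]) = proots (char_poly (transpose_mat A * A))"

definition OPT :: "real mat \<Rightarrow> (nat \<Rightarrow> real) \<Rightarrow> nat \<Rightarrow> real" where
  "OPT A lam k = (\<Sum>i\<in>{k<..dim_col A}. lam i)"

end

theory Submission
  imports Defs
begin



definition detS :: "(nat \<Rightarrow> nat \<Rightarrow> real) \<Rightarrow> nat set \<Rightarrow> real" where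
  "detS M T = (\<Sum>p\<in>{p. p permutes T}. of_int (sign p) * (\<Prod>i\<in>T. M i (p i)))"

lemma permutes_fix_iff:
  assumes "X \<subseteq> A"
  shows "(p permutes A \<and> (\<forall>i\<in>A - X. p i = i)) \<longleftrightarrow> p permutes X"
proof
  assume a: "p permutes X"
  have "p permutes A" by (rule permutes_subset[OF a assms])
  moreover have "\<forall>i\<in>A - X. p i = i" using a by (simp add: permutes_not_in)
  ultimately show "p permutes A \<and> (\<forall>i\<in>A - X. p i = i)" by simp
next
  assume h: "p permutes A \<and> (\<forall>i\<in>A - X. p i = i)"
  then have h1: "p permutes A" and h2: "\<forall>i\<in>A - X. p i = i" by auto
  show "p permutes X" unfolding permutes_def
  proof (intro conjI allI impI)
    fix x assume x: "x \<notin> X"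
    show "p x = x"
    proof (cases "x \<in> A")
      case True thus ?thesis using h2 x by simp
    next
      case False thus ?thesis using h1 by (simp add: permutes_not_in)
    qed
  next
    fix y show "\<exists>!x. p x = y" using h1 unfolding permutes_def by (elim conjE) (rule spec)
  qed
qed

lemma det_plus_diag:
  assumes M: "M \<in> carrier_mat n n"
  shows "det (M + x \<cdot>\<^sub>m 1\<^sub>m n) = (\<Sum>X\<in>Pow {0..<n}. x ^ (n - card X) * detS (\<lambda>i j. M $$ (i,j)) X)"
proof -
  let ?A = "{0..<n}"
  have C: "M + x \<cdot>\<^sub>m 1\<^sub>m n \<in> carrier_mat n n" using M by auto
  have "det (M + x \<cdot>\<^sub>m 1\<^sub>m n) = (\<Sum>p\<in>{p. p permutes ?A}. of_int (sign p) *
      (\<Prod>i\<in>?A. M $$ (i, p i) + (if p i = i then x else 0)))"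
    unfolding det_def'[OF C]
  proof (rule sum.cong[OF refl])
    fix p assume p: "p \<in> {p. p permutes ?A}"
    have "(\<Prod>i = 0..<n. (M + x \<cdot>\<^sub>m 1\<^sub>m n) $$ (i, p i)) = (\<Prod>i\<in>?A. M $$ (i, p i) + (if p i = i then x else 0))"
      by (rule prod.cong[OF refl]) (use p permutes_in_image M in auto)
    thus "signof p * (\<Prod>i = 0..<n. (M + x \<cdot>\<^sub>m 1\<^sub>m n) $$ (i, p i)) =
         of_int (sign p) * (\<Prod>i\<in>?A. M $$ (i, p i) + (if p i = i then x else 0))" by simp
  qed
  also have "\<dots> = (\<Sum>p\<in>{p. p permutes ?A}. \<Sum>X\<in>Pow ?A. of_int (sign p) *
      ((\<Prod>i\<in>X. M $$ (i, p i)) * (\<Prod>i\<in>?A - X. (if p i = i then x else 0))))"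
    by (simp add: prod_add sum_distrib_left)
  also have "\<dots> = (\<Sum>X\<in>Pow ?A. \<Sum>p\<in>{p. p permutes ?A}. of_int (sign p) *
      ((\<Prod>i\<in>X. M $$ (i, p i)) * (\<Prod>i\<in>?A - X. (if p i = i then x else 0))))"
    by (rule sum.swap)
  also have "\<dots> = (\<Sum>X\<in>Pow ?A. x ^ (n - card X) * detS (\<lambda>i j. M $$ (i,j)) X)"
  proof (rule sum.cong[OF refl])
    fix X assume X: "X \<in> Pow ?A"
    have fin: "finite {p. p permutes ?A}" by (simp add: finite_permutations)
    have "(\<Sum>p\<in>{p. p permutes ?A}. of_int (sign p) *
      ((\<Prod>i\<in>X. M $$ (i, p i)) * (\<Prod>i\<in>?A - X. (if p i = i then x else 0)))) =
      (\<Sum>p\<in>{p. p permutes ?A}. if (\<forall>i\<in>?A - X. p i = i) then x ^ (n - card X) * (of_int (sign p) *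
      (\<Prod>i\<in>X. M $$ (i, p i))) else 0)"
    proof (rule sum.cong[OF refl])
      fix p
      have cX: "card (?A - X) = n - card X" using X by (simp add: card_Diff_subset finite_subset)
      show "of_int (sign p) * ((\<Prod>i\<in>X. M $$ (i, p i)) * (\<Prod>i\<in>?A - X. (if p i = i then x else 0))) =
        (if (\<forall>i\<in>?A - X. p i = i) then x ^ (n - card X) * (of_int (sign p) * (\<Prod>i\<in>X. M $$ (i, p i))) else 0)"
      proof (cases "\<forall>i\<in>?A - X. p i = i")
        case True
        then have "(\<Prod>i\<in>?A - X. (if p i = i then x else 0)) = (\<Prod>i\<in>?A - X. x)" by (intro prod.cong) auto
        then show ?thesis using True cX by simp
      next
        case False
        then obtain i where "i \<in> ?A - X" "p i \<noteq> i" by blast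
        then have z: "(\<Prod>i\<in>?A - X. (if p i = i then x else 0)) = 0"
          by (intro prod_zero) auto
        show ?thesis unfolding z if_not_P[OF False] by simp
      qed
    qed
    also have "\<dots> = (\<Sum>p\<in>{p. p permutes ?A \<and> (\<forall>i\<in>?A - X. p i = i)}. x ^ (n - card X) * (of_int (sign p) *
      (\<Prod>i\<in>X. M $$ (i, p i))))"
      by (subst sum.inter_filter[OF fin, symmetric]) (simp add: Collect_conj_eq)
    also have "{p. p permutes ?A \<and> (\<forall>i\<in>?A - X. p i = i)} = {p. p permutes X}"
      using permutes_fix_iff[of X ?A] X by auto
    finally show "(\<Sum>p\<in>{p. p permutes ?A}. of_int (sign p) *
      ((\<Prod>i\<in>X. M $$ (i, p i)) * (\<Prod>i\<in>?A - X. (if p i = i then x else 0)))) =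
      x ^ (n - card X) * detS (\<lambda>i j. M $$ (i,j)) X"
      unfolding detS_def by (simp add: sum_distrib_left)
  qed
  finally show ?thesis .
qed





lemma detS_reindex:
  assumes f: "bij_betw f {..<m} T"
  shows "det (mat m m (\<lambda>(a,b). M (f a) (f b))) = detS M T"
proof -
  let ?A = "{0..<m}"
  have fA: "bij_betw f ?A T" using f by (simp add: atLeast0LessThan)
  define h where "h = (\<lambda>\<pi> x. if x \<in> T then f (\<pi> (inv_into ?A f x)) else x)"
  have bij: "bij_betw h {p. p permutes ?A} {p. p permutes T}"
    unfolding h_def by (rule bij_betw_permutations[OF fA])
  have hmp: "h p = map_permutation ?A f p" for p
    using fA unfolding h_def map_permutation_def restrict_id_def bij_betw_def by (auto simp: fun_eq_iff)
  have inj: "inj_on f ?A" using fA bij_betw_def by blast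
  have hfa: "h p (f a) = f (p a)" if "a \<in> ?A" for p a
    using that fA inj unfolding h_def bij_betw_def by auto
  have "detS M T = (\<Sum>p\<in>{p. p permutes ?A}. of_int (sign (h p)) * (\<Prod>i\<in>T. M i (h p i)))"
    unfolding detS_def by (rule sum.reindex_bij_betw[OF bij, symmetric])
  also have "\<dots> = (\<Sum>p\<in>{p. p permutes ?A}. of_int (sign p) * (\<Prod>a\<in>?A. M (f a) (f (p a))))"
  proof (rule sum.cong[OF refl])
    fix p assume p: "p \<in> {p. p permutes ?A}"
    have "sign (h p) = sign p" unfolding hmp by (rule sign_map_permutation[OF inj]) (use p in auto)
    moreover have "(\<Prod>i\<in>T. M i (h p i)) = (\<Prod>a\<in>?A. M (f a) (h p (f a)))"
      by (rule prod.reindex_bij_betw[OF fA, symmetric])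
    moreover have "(\<Prod>a\<in>?A. M (f a) (h p (f a))) = (\<Prod>a\<in>?A. M (f a) (f (p a)))"
      by (rule prod.cong[OF refl]) (simp add: hfa)
    ultimately show "of_int (sign (h p)) * (\<Prod>i\<in>T. M i (h p i)) = of_int (sign p) * (\<Prod>a\<in>?A. M (f a) (f (p a)))"
      by simp
  qed
  also have "\<dots> = det (mat m m (\<lambda>(a,b). M (f a) (f b)))"
    unfolding det_def'[OF mat_carrier]
  proof (rule sum.cong[OF refl])
    fix p assume p: "p \<in> {p. p permutes ?A}"
    have "(\<Prod>a\<in>?A. M (f a) (f (p a))) = (\<Prod>i = 0..<m. mat m m (\<lambda>(a,b). M (f a) (f b)) $$ (i, p i))"
      by (rule prod.cong[OF refl]) (use p permutes_in_image in auto)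
    then show "of_int (sign p) * (\<Prod>a\<in>?A. M (f a) (f (p a))) = signof p * (\<Prod>i = 0..<m. mat m m (\<lambda>(a,b). M (f a) (f b)) $$ (i, p i))"
      by simp
  qed
  finally show ?thesis by simp
qed



lemma proots_prod_dvd:
  fixes p :: "'a :: idom poly"
  shows "(\<Prod>x\<in>#proots p. [:-x, 1:]) dvd p"
proof (induction p rule: poly_root_order_induct)
  case 0 then show ?case by simp
next
  case (no_roots p)
  then have "p \<noteq> 0" by auto
  have "proots p = {#}"
    using no_roots \<open>p \<noteq> 0\<close> by (intro multiset_eqI) (simp add: order_root)
  then show ?case by simp
next
  case (root p x n)
  have p0: "p \<noteq> 0" using root.hyps by auto
  have l0: "[:-x, 1:] ^ n \<noteq> 0" by simp
  have "proots ([:-x, 1:] ^ n * p) = proots ([:-x, 1:] ^ n) + proots p"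
    by (rule proots_mult[OF l0 p0])
  also have "proots ([:-x, 1:] ^ n) = replicate_mset n x"
    using proots_linear_factor[of "-x"] by (simp add: proots_power)
  finally have e: "proots ([:-x, 1:] ^ n * p) = replicate_mset n x + proots p" .
  show ?case unfolding e using root.IH by (simp add: mult_dvd_mono)
qed

lemma charpoly_eval:
  fixes G :: "real mat"
  assumes G: "G \<in> carrier_mat n n"
    and ev: "mset (map lam [1..<n+1]) = proots (char_poly G)"
  shows "poly (char_poly G) x = (\<Prod>i\<in>{1..n}. x - lam i)"
proof -
  let ?p = "char_poly G"
  let ?L = "map lam [1..<n+1]"
  define Q where "Q = (\<Prod>a\<leftarrow>?L. [:-a, 1:])"
  have dm: "degree ?p = n" "coeff ?p n = 1" using degree_monic_char_poly[OF G] by auto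
  have p0: "?p \<noteq> 0" using dm by auto
  have QQ: "(\<Prod>x\<in>#proots ?p. [:-x, 1:]) = Q"
    unfolding Q_def ev[symmetric] by (metis mset_map prod_mset_prod_list)
  obtain r where r: "?p = Q * r" using proots_prod_dvd[of ?p] unfolding QQ by (elim dvdE)
  have dQ: "degree Q = n" unfolding Q_def using degree_linear_factors[of uminus ?L] by simp
  have mQ: "monic Q" unfolding Q_def by (rule monic_prod_list) auto
  have Q0: "Q \<noteq> 0" using mQ by auto
  have r0: "r \<noteq> 0" using r p0 by auto
  have "degree ?p = degree Q + degree r" unfolding r by (rule degree_mult_eq[OF Q0 r0])
  then have dr: "degree r = 0" using dm dQ by simp
  have "lead_coeff ?p = lead_coeff Q * lead_coeff r" unfolding r by (rule lead_coeff_mult)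
  then have "lead_coeff r = 1" using mQ dm by simp
  then have "r = 1" using dr by (metis monic_degree_0)
  then have pQ: "?p = Q" using r by simp
  have "poly Q x = (\<Prod>a\<leftarrow>?L. x - a)" unfolding Q_def by (induction ?L) (simp_all add: poly_prod_list o_def)
  also have "\<dots> = (\<Prod>i\<leftarrow>[1..<n+1]. x - lam i)" by (simp add: o_def)
  also have "\<dots> = (\<Prod>i\<in>{1..n}. x - lam i)"
  proof -
    have "(\<Prod>i\<leftarrow>[1..<n+1]. x - lam i) = (\<Prod>i\<in>set [1..<n+1]. x - lam i)"
      by (metis distinct_upt prod.distinct_set_conv_list)
    also have "set [1..<n+1] = {1..n}" by auto
    finally show ?thesis .
  qed
  finally show ?thesis using pQ by simp
qed





lemma detS_uminus: "finite T \<Longrightarrow> detS (\<lambda>i j. - M i j) T = (-1) ^ card T * detS M T"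
  unfolding detS_def by (simp add: prod_uminus sum_distrib_left mult_ac)

lemma pow_sum_coeffs:
  fixes a b :: "nat set \<Rightarrow> real"
  assumes h: "\<And>x. (\<Sum>X\<in>Pow {..<n}. x ^ (n - card X) * a X) = (\<Sum>X\<in>Pow {..<n}. x ^ (n - card X) * b X)"
    and j: "j \<le> n"
  shows "(\<Sum>X\<in>ksubsets n j. a X) = (\<Sum>X\<in>ksubsets n j. b X)"
proof -
  have grp: "(\<Sum>X\<in>Pow {..<n}. x ^ (n - card X) * f X) = (\<Sum>i\<le>n. (\<Sum>X\<in>ksubsets n (n - i). f X) * x ^ i)"
    for f :: "nat set \<Rightarrow> real" and x :: real
  proof -
    have fin: "finite (Pow {..<n})" by simp
    have "(\<Sum>X\<in>Pow {..<n}. x ^ (n - card X) * f X) =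
        (\<Sum>i\<le>n. \<Sum>X\<in>{X\<in>Pow {..<n}. n - card X = i}. x ^ (n - card X) * f X)"
      by (rule sum.group[symmetric]) auto
    also have "\<dots> = (\<Sum>i\<le>n. (\<Sum>X\<in>ksubsets n (n - i). f X) * x ^ i)"
    proof (rule sum.cong[OF refl])
      fix i assume i: "i \<in> {..n}"
      have "{X\<in>Pow {..<n}. n - card X = i} = ksubsets n (n - i)"
      proof -
        have "card X \<le> n" if "X \<subseteq> {..<n}" for X
          using card_mono[OF _ that] by simp
        then show ?thesis using i unfolding ksubsets_def by force
      qed
      then show "(\<Sum>X\<in>{X\<in>Pow {..<n}. n - card X = i}. x ^ (n - card X) * f X) = (\<Sum>X\<in>ksubsets n (n - i). f X) * x ^ i"
      proof -
        have "(\<Sum>X\<in>ksubsets n (n - i). x ^ (n - card X) * f X) = (\<Sum>X\<in>ksubsets n (n - i). x ^ i * f X)"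
          by (rule sum.cong[OF refl]) (use i in \<open>auto simp: ksubsets_def\<close>)
        then show ?thesis using \<open>{X\<in>Pow {..<n}. n - card X = i} = ksubsets n (n - i)\<close>
          by (simp add: sum_distrib_left mult.commute)
      qed
    qed
    finally show ?thesis .
  qed
  have "\<forall>x. (\<Sum>i\<le>n. (\<Sum>X\<in>ksubsets n (n - i). a X) * x ^ i) = (\<Sum>i\<le>n. (\<Sum>X\<in>ksubsets n (n - i). b X) * x ^ i)"
    using h unfolding grp by simp
  then have "\<forall>i\<le>n. (\<Sum>X\<in>ksubsets n (n - i). a X) = (\<Sum>X\<in>ksubsets n (n - i). b X)"
    by (subst (asm) polyfun_eq_coeffs)
  from this[rule_format, of "n - j"] j show ?thesis by simp
qed




lemma detS_cong:
  assumes "\<And>i j. i \<in> X \<Longrightarrow> j \<in> X \<Longrightarrow> M i j = M' i j"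
  shows "detS M X = detS M' X"
  unfolding detS_def
proof (rule sum.cong[OF refl])
  fix p assume "p \<in> {p. p permutes X}"
  then have "\<And>i. i \<in> X \<Longrightarrow> p i \<in> X" by (simp add: permutes_in_image)
  then show "of_int (sign p) * (\<Prod>i\<in>X. M i (p i)) = of_int (sign p) * (\<Prod>i\<in>X. M' i (p i))"
    using assms by (simp cong: prod.cong)
qed

lemma sum_minors:
  fixes G :: "real mat"
  assumes G: "G \<in> carrier_mat n n"
    and ev: "mset (map lam [1..<n+1]) = proots (char_poly G)"
    and j: "j \<le> n"
  shows "(\<Sum>X\<in>ksubsets n j. detS (\<lambda>a b. G $$ (a,b)) X) = (\<Sum>X\<in>ksubsets n j. \<Prod>i\<in>X. lam (Suc i))"
proof -
  let ?g = "\<lambda>a b. G $$ (a,b)"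
  have mG: "- G \<in> carrier_mat n n" using G by auto
  have key: "(\<Sum>X\<in>Pow {..<n}. x ^ (n - card X) * ((-1) ^ card X * detS ?g X)) =
             (\<Sum>X\<in>Pow {..<n}. x ^ (n - card X) * ((-1) ^ card X * (\<Prod>i\<in>X. lam (Suc i))))" for x
  proof -
    have "poly (char_poly G) x = det (- G + x \<cdot>\<^sub>m 1\<^sub>m n)"
      unfolding char_poly_def
      by (rule poly_det_cong[of _ n]) (use G in \<open>auto simp: char_poly_matrix_def\<close>)
    also have "\<dots> = (\<Sum>X\<in>Pow {0..<n}. x ^ (n - card X) * detS (\<lambda>i j. (- G) $$ (i,j)) X)"
      by (rule det_plus_diag[OF mG])
    also have "\<dots> = (\<Sum>X\<in>Pow {..<n}. x ^ (n - card X) * ((-1) ^ card X * detS ?g X))"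
    proof (rule sum.cong)
      fix X assume X: "X \<in> Pow {..<n}"
      then have fX: "finite X" by (auto intro: finite_subset)
      have "detS (\<lambda>i j. (- G) $$ (i,j)) X = detS (\<lambda>i j. - ?g i j) X"
        by (rule detS_cong) (use X G in \<open>auto simp: subset_iff\<close>)
      then show "x ^ (n - card X) * detS (\<lambda>i j. (- G) $$ (i,j)) X = x ^ (n - card X) * ((-1) ^ card X * detS ?g X)"
        using detS_uminus[OF fX, of ?g] by simp
    qed (simp add: atLeast0LessThan)
    finally have L: "poly (char_poly G) x = (\<Sum>X\<in>Pow {..<n}. x ^ (n - card X) * ((-1) ^ card X * detS ?g X))" .
    have "poly (char_poly G) x = (\<Prod>i\<in>{1..n}. x - lam i)" by (rule charpoly_eval[OF G ev])
    also have "\<dots> = (\<Prod>i\<in>{..<n}. x - lam (Suc i))"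
    proof -
      have "(\<Prod>i\<in>{..<n}. x - lam (Suc i)) = (\<Prod>i\<in>Suc ` {..<n}. x - lam i)"
        by (subst prod.reindex) auto
      also have "Suc ` {..<n} = {1..n}" by (simp add: image_Suc_lessThan)
      finally show ?thesis by simp
    qed
    also have "\<dots> = (\<Sum>X\<in>Pow {..<n}. (-1) ^ card X * (\<Prod>i\<in>X. lam (Suc i)) * (\<Prod>i\<in>{..<n} - X. x))"
      by (rule prod_diff_conv_sum) simp
    also have "\<dots> = (\<Sum>X\<in>Pow {..<n}. x ^ (n - card X) * ((-1) ^ card X * (\<Prod>i\<in>X. lam (Suc i))))"
    proof (rule sum.cong[OF refl])
      fix X assume X: "X \<in> Pow {..<n}"
      then have "card ({..<n} - X) = n - card X" by (simp add: card_Diff_subset finite_subset)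
      then show "(-1) ^ card X * (\<Prod>i\<in>X. lam (Suc i)) * (\<Prod>i\<in>{..<n} - X. x) = x ^ (n - card X) * ((-1) ^ card X * (\<Prod>i\<in>X. lam (Suc i)))"
        by simp
    qed
    finally show ?thesis using L by simp
  qed
  have "(\<Sum>X\<in>ksubsets n j. (-1) ^ card X * detS ?g X) = (\<Sum>X\<in>ksubsets n j. (-1) ^ card X * (\<Prod>i\<in>X. lam (Suc i)))"
    by (rule pow_sum_coeffs[OF key j])
  moreover have "(\<Sum>X\<in>ksubsets n j. (-1) ^ card X * f X) = (-1) ^ j * (\<Sum>X\<in>ksubsets n j. f X)" for f :: "nat set \<Rightarrow> real"
    by (simp add: sum_distrib_left ksubsets_def)
  ultimately show ?thesis by simp
qed



lemma finite_ksubsets[simp]: "finite (ksubsets n k)"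
  unfolding ksubsets_def by (rule finite_subset[of _ "Pow {..<n}"]) auto

lemma pair_count:
  fixes F :: "nat set \<Rightarrow> nat \<Rightarrow> real"
  shows "(\<Sum>S\<in>ksubsets n k. \<Sum>i\<in>{..<n} - S. F (insert i S) i) = (\<Sum>T\<in>ksubsets n (Suc k). \<Sum>i\<in>T. F T i)"
proof -
  let ?P = "Sigma (ksubsets n k) (\<lambda>S. {..<n} - S)"
  let ?Q = "Sigma (ksubsets n (Suc k)) (\<lambda>T. T)"
  have fQ: "\<And>T. T \<in> ksubsets n (Suc k) \<Longrightarrow> finite T" unfolding ksubsets_def by (auto intro: finite_subset)
  have "(\<Sum>S\<in>ksubsets n k. \<Sum>i\<in>{..<n} - S. F (insert i S) i) = (\<Sum>(S,i)\<in>?P. F (insert i S) i)"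
    by (rule sum.Sigma) auto
  also have "\<dots> = (\<Sum>(T,i)\<in>?Q. F T i)"
  proof (rule sum.reindex_bij_witness[where i = "\<lambda>(T,i). (T - {i}, i)" and j = "\<lambda>(S,i). (insert i S, i)"])
    fix a assume "a \<in> ?P" then show "(\<lambda>(T,i). (T - {i}, i)) ((\<lambda>(S,i). (insert i S, i)) a) = a"
      by (auto simp: ksubsets_def)
  next
    fix a assume "a \<in> ?P" then show "(\<lambda>(S,i). (insert i S, i)) a \<in> ?Q"
      by (auto simp: ksubsets_def card_insert_if finite_subset)
  next
    fix b assume "b \<in> ?Q" then show "(\<lambda>(S,i). (insert i S, i)) ((\<lambda>(T,i). (T - {i}, i)) b) = b"
      by (auto simp: ksubsets_def)
  next
    fix b assume b: "b \<in> ?Q"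
    obtain T i where bi: "b = (T,i)" by fastforce
    have fT: "finite T" using b bi fQ by auto
    show "(\<lambda>(T,i). (T - {i}, i)) b \<in> ?P"
      using b bi fT by (auto simp: ksubsets_def card_Diff_singleton)
  next
    fix a assume "a \<in> ?P" then show "(\<lambda>(T,i). F T i) ((\<lambda>(S,i). (insert i S, i)) a) = (\<lambda>(S,i). F (insert i S) i) a"
      by auto
  qed
  also have "\<dots> = (\<Sum>T\<in>ksubsets n (Suc k). \<Sum>i\<in>T. F T i)"
    by (rule sum.Sigma[symmetric]) (auto dest: fQ)
  finally show ?thesis .
qed



definition esym :: "(nat \<Rightarrow> real) \<Rightarrow> nat \<Rightarrow> nat \<Rightarrow> real" where
  "esym \<mu> n j = (\<Sum>X\<in>ksubsets n j. \<Prod>i\<in>X. \<mu> i)"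

lemma ksubsets_finite_mem: "X \<in> ksubsets n k \<Longrightarrow> finite X"
  unfolding ksubsets_def by (auto intro: finite_subset)

lemma missing_bound:
  fixes \<mu> :: "nat \<Rightarrow> real"
  assumes nn: "\<And>i. i < n \<Longrightarrow> 0 \<le> \<mu> i"
    and mono: "\<And>i j. i \<le> j \<Longrightarrow> j < n \<Longrightarrow> \<mu> j \<le> \<mu> i"
    and kn: "k < n" and wk: "w \<le> k"
    and S: "S \<in> ksubsets n k"
  shows "(\<Sum>i\<in>{k-w..<n} - S. \<mu> i) \<le> (\<Sum>i\<in>{k..<n}. \<mu> i) + real (min (n-k) w) * \<mu> (k-w)"
proof -
  let ?r = "k - w"
  let ?L = "{?r..<n}"
  have fS: "finite S" and Sn: "S \<subseteq> {..<n}" and cS: "card S = k" using S unfolding ksubsets_def by (auto intro: finite_subset)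
  have le_r: "\<mu> i \<le> \<mu> ?r" if "i \<in> ?L" for i using that mono by auto
  have A: "(\<Sum>i\<in>?L - S. \<mu> i) \<le> (\<Sum>i\<in>{k..<n}. \<mu> i) + real w * \<mu> ?r"
  proof -
    have a1: "(\<Sum>i\<in>?L - S. \<mu> i) \<le> (\<Sum>i\<in>?L. \<mu> i)"
      by (rule sum_mono2) (use nn in auto)
    have "?L = {?r..<k} \<union> {k..<n}" using wk kn by auto
    then have "(\<Sum>i\<in>?L. \<mu> i) = (\<Sum>i\<in>{?r..<k}. \<mu> i) + (\<Sum>i\<in>{k..<n}. \<mu> i)"
      by (simp add: sum.union_disjoint)
    moreover have "(\<Sum>i\<in>{?r..<k}. \<mu> i) \<le> (\<Sum>i\<in>{?r..<k}. \<mu> ?r)"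
      by (rule sum_mono) (use le_r kn in auto)
    moreover have "(\<Sum>i\<in>{?r..<k}. \<mu> ?r) = real w * \<mu> ?r" using wk by simp
    ultimately show ?thesis using a1 by linarith
  qed
  have B: "(\<Sum>i\<in>?L - S. \<mu> i) \<le> real (n - k) * \<mu> ?r"
  proof -
    have "S \<subseteq> {..<?r} \<union> (S \<inter> ?L)" using Sn by auto
    then have "card S \<le> card ({..<?r} \<union> (S \<inter> ?L))" by (rule card_mono[rotated]) auto
    also have "\<dots> \<le> card {..<?r} + card (S \<inter> ?L)" by (rule card_Un_le)
    finally have c1: "w \<le> card (S \<inter> ?L)" using cS wk by simp
    have "card (?L - S) = card ?L - card (?L \<inter> S)" by (simp add: card_Diff_subset_Int Diff_Int2[symmetric])
    then have c2: "card (?L - S) \<le> n - k" using c1 wk kn by (simp add: Int_commute)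
    have "(\<Sum>i\<in>?L - S. \<mu> i) \<le> (\<Sum>i\<in>?L - S. \<mu> ?r)" by (rule sum_mono) (use le_r in auto)
    also have "\<dots> = real (card (?L - S)) * \<mu> ?r" by simp
    also have "\<dots> \<le> real (n - k) * \<mu> ?r"
      by (rule mult_right_mono) (use c2 nn kn wk in auto)
    finally show ?thesis .
  qed
  have T0: "0 \<le> (\<Sum>i\<in>{k..<n}. \<mu> i)" by (rule sum_nonneg) (use nn in auto)
  show ?thesis
  proof (cases "w \<le> n - k")
    case True then show ?thesis using A by (simp add: min_def)
  next
    case False then show ?thesis using B T0 by (simp add: min_def)
  qed
qed

lemma esym_step:
  fixes \<mu> :: "nat \<Rightarrow> real"
  assumes nn: "\<And>i. i < n \<Longrightarrow> 0 \<le> \<mu> i"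
    and mono: "\<And>i j. i \<le> j \<Longrightarrow> j < n \<Longrightarrow> \<mu> j \<le> \<mu> i"
    and kn: "k < n" and wk: "w \<le> k"
  shows "real (w + 1) * esym \<mu> n (Suc k) \<le> esym \<mu> n k * ((\<Sum>i\<in>{k..<n}. \<mu> i) + real (min (n-k) w) * \<mu> (k-w))"
proof -
  let ?r = "k - w"
  let ?L = "{?r..<n}"
  let ?B = "(\<Sum>i\<in>{k..<n}. \<mu> i) + real (min (n-k) w) * \<mu> (k-w)"
  define F where "F = (\<lambda>T i. if i \<in> ?L then (\<Prod>j\<in>T. \<mu> j) else (0::real))"
  have prodnn: "0 \<le> (\<Prod>j\<in>X. \<mu> j)" if "X \<subseteq> {..<n}" for X
    by (rule prod_nonneg) (use that nn in auto)
  have step1: "real (w + 1) * (\<Prod>j\<in>T. \<mu> j) \<le> (\<Sum>i\<in>T. F T i)" if T: "T \<in> ksubsets n (Suc k)" for T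
  proof -
    have fT: "finite T" and Tn: "T \<subseteq> {..<n}" and cT: "card T = Suc k"
      using T unfolding ksubsets_def by (auto intro: finite_subset)
    have "T \<subseteq> {..<?r} \<union> (T \<inter> ?L)" using Tn by auto
    then have "card T \<le> card ({..<?r} \<union> (T \<inter> ?L))" by (rule card_mono[rotated]) auto
    also have "\<dots> \<le> card {..<?r} + card (T \<inter> ?L)" by (rule card_Un_le)
    finally have c1: "w + 1 \<le> card (T \<inter> ?L)" using cT wk by simp
    have "(\<Sum>i\<in>T. F T i) = (\<Sum>i\<in>T \<inter> ?L. (\<Prod>j\<in>T. \<mu> j))"
      unfolding F_def by (simp add: sum.inter_filter[OF fT, symmetric] Int_def)
    also have "\<dots> = real (card (T \<inter> ?L)) * (\<Prod>j\<in>T. \<mu> j)" by simp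
    finally show ?thesis using c1 prodnn[OF Tn] by (simp add: mult_right_mono)
  qed
  have "real (w + 1) * esym \<mu> n (Suc k) = (\<Sum>T\<in>ksubsets n (Suc k). real (w + 1) * (\<Prod>j\<in>T. \<mu> j))"
    unfolding esym_def by (simp add: sum_distrib_left)
  also have "\<dots> \<le> (\<Sum>T\<in>ksubsets n (Suc k). \<Sum>i\<in>T. F T i)" by (rule sum_mono) (rule step1)
  also have "\<dots> = (\<Sum>S\<in>ksubsets n k. \<Sum>i\<in>{..<n} - S. F (insert i S) i)" by (rule pair_count[symmetric])
  also have "\<dots> = (\<Sum>S\<in>ksubsets n k. (\<Prod>j\<in>S. \<mu> j) * (\<Sum>i\<in>?L - S. \<mu> i))"
  proof (rule sum.cong[OF refl])
    fix S assume S: "S \<in> ksubsets n k"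
    have fS: "finite S" using S ksubsets_finite_mem by blast
    have "(\<Sum>i\<in>{..<n} - S. F (insert i S) i) = (\<Sum>i\<in>{..<n} - S. if i \<in> ?L then (\<Prod>j\<in>S. \<mu> j) * \<mu> i else 0)"
      by (rule sum.cong[OF refl]) (auto simp: F_def fS mult.commute)
    also have "\<dots> = (\<Sum>i\<in>{i\<in>{..<n} - S. i \<in> ?L}. (\<Prod>j\<in>S. \<mu> j) * \<mu> i)"
      by (rule sum.inter_filter[symmetric]) simp
    also have "{i\<in>{..<n} - S. i \<in> ?L} = ?L - S" by auto
    finally show "(\<Sum>i\<in>{..<n} - S. F (insert i S) i) = (\<Prod>j\<in>S. \<mu> j) * (\<Sum>i\<in>?L - S. \<mu> i)"
      by (simp add: sum_distrib_left)
  qed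
  also have "\<dots> \<le> (\<Sum>S\<in>ksubsets n k. (\<Prod>j\<in>S. \<mu> j) * ?B)"
  proof (rule sum_mono)
    fix S assume S: "S \<in> ksubsets n k"
    have "S \<subseteq> {..<n}" using S unfolding ksubsets_def by auto
    then show "(\<Prod>j\<in>S. \<mu> j) * (\<Sum>i\<in>?L - S. \<mu> i) \<le> (\<Prod>j\<in>S. \<mu> j) * ?B"
      using missing_bound[where \<mu>=\<mu> and n=n, OF nn mono kn wk S] prodnn by (simp add: mult_left_mono)
  qed
  also have "\<dots> = esym \<mu> n k * ?B" unfolding esym_def by (simp add: sum_distrib_right)
  finally show ?thesis .
qed



lemma pick_bij:
  assumes fin: "finite S"
  shows "bij_betw (pick S) {..<card S} S"
proof (rule bij_betw_imageI)
  have mono: "pick S a < pick S b" if "a < b" "b < card S" for a b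
  proof -
    have "b < card S \<or> infinite S" using that by simp
    from pick_mono[OF this] show ?thesis using that by simp
  qed
  show "inj_on (pick S) {..<card S}"
  proof (rule inj_onI)
    fix a b assume a: "a \<in> {..<card S}" and b: "b \<in> {..<card S}" and e: "pick S a = pick S b"
    show "a = b"
    proof (rule ccontr)
      assume ne: "a \<noteq> b"
      have "a < b \<or> b < a" using ne by linarith
      then show False
      proof
        assume "a < b" then have "pick S a < pick S b" using mono b by simp
        then show False using e by simp
      next
        assume "b < a" then have "pick S b < pick S a" using mono a by simp
        then show False using e by simp
      qed
    qed
  qed
  show "pick S ` {..<card S} = S"
  proof
    show "pick S ` {..<card S} \<subseteq> S"
    proof
      fix x assume "x \<in> pick S ` {..<card S}"
      then obtain a where a: "a < card S" "x = pick S a" by auto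
      have "a < card S \<or> infinite S" using a by simp
      from pick_in_set[OF this] show "x \<in> S" using a by simp
    qed
    show "S \<subseteq> pick S ` {..<card S}"
    proof
      fix x assume x: "x \<in> S"
      have sub: "{a\<in>S. a < x} \<subset> S" using x by blast
      have "card {a\<in>S. a < x} < card S" by (rule psubset_card_mono[OF fin sub])
      moreover have "pick S (card {a\<in>S. a < x}) = x" by (rule pick_card_in_set[OF x])
      ultimately show "x \<in> pick S ` {..<card S}" by (intro image_eqI[where x="card {a\<in>S. a < x}"]) auto
    qed
  qed
qed

lemma cols_sub_carrier:
  assumes A: "A \<in> carrier_mat m n" and S: "S \<subseteq> {..<n}"
  shows "cols_sub A S \<in> carrier_mat m (card S)"
proof -
  have "{j. j < n \<and> j \<in> S} = S" using S by auto
  moreover have "{i. i < m \<and> i \<in> {..<m}} = {..<m}" by auto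
  ultimately show ?thesis using A unfolding cols_sub_def submatrix_def by auto
qed

lemma cols_sub_index:
  assumes A: "A \<in> carrier_mat m n" and S: "S \<subseteq> {..<n}" and i: "i < m" and a: "a < card S"
  shows "cols_sub A S $$ (i, a) = A $$ (i, pick S a)"
proof -
  have e1: "{j. j < dim_col A \<and> j \<in> S} = S" using S A by auto
  have e2: "{j. j < dim_row A \<and> j \<in> {..<m}} = {..<m}" using A by auto
  have cs: "cols_sub A S = submatrix A {..<m} S" using A by (simp add: cols_sub_def)
  have "cols_sub A S $$ (i, a) = A $$ (pick {..<m} i, pick S a)"
    unfolding cs by (rule submatrix_index) (use i a e1 e2 A in auto)
  also have "pick {..<m} i = i"
  proof -
    have "{a\<in>{..<m}. a < i} = {..<i}" using i by auto
    then have "card {a\<in>{..<m}. a < i} = i" by simp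
    then show ?thesis using pick_card_in_set[of i "{..<m}"] i by simp
  qed
  finally show ?thesis .
qed

definition gram :: "real mat \<Rightarrow> nat \<Rightarrow> nat \<Rightarrow> real" where
  "gram A i j = (transpose_mat A * A) $$ (i, j)"

lemma gram_sym: "A \<in> carrier_mat m n \<Longrightarrow> i < n \<Longrightarrow> j < n \<Longrightarrow> gram A i j = gram A j i"
  unfolding gram_def by (auto simp: scalar_prod_def mult.commute)

lemma gram_alt: "A \<in> carrier_mat m n \<Longrightarrow> i < n \<Longrightarrow> j < n \<Longrightarrow> gram A i j = (\<Sum>r<m. A $$ (r,i) * A $$ (r,j))"
  unfolding gram_def by (auto simp: scalar_prod_def atLeast0LessThan)

lemma GS_index:
  assumes A: "A \<in> carrier_mat m n" and S: "S \<subseteq> {..<n}" and a: "a < card S" and b: "b < card S"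
  shows "(transpose_mat (cols_sub A S) * cols_sub A S) $$ (a, b) = gram A (pick S a) (pick S b)"
proof -
  have C: "cols_sub A S \<in> carrier_mat m (card S)" by (rule cols_sub_carrier[OF A S])
  have fS: "finite S" using S finite_subset by blast
  have pa: "pick S a < n" "pick S b < n" using pick_bij[OF fS] a b S by (auto dest: bij_betwE)
  have "(transpose_mat (cols_sub A S) * cols_sub A S) $$ (a, b) = (\<Sum>r<m. cols_sub A S $$ (r,a) * cols_sub A S $$ (r,b))"
    using C a b by (auto simp: scalar_prod_def atLeast0LessThan)
  also have "\<dots> = (\<Sum>r<m. A $$ (r, pick S a) * A $$ (r, pick S b))"
    by (rule sum.cong[OF refl]) (simp add: cols_sub_index[OF A S] a b)
  also have "\<dots> = gram A (pick S a) (pick S b)" using gram_alt[OF A pa] by simp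
  finally show ?thesis .
qed

lemma GS_eq:
  assumes A: "A \<in> carrier_mat m n" and S: "S \<subseteq> {..<n}"
  shows "transpose_mat (cols_sub A S) * cols_sub A S = mat (card S) (card S) (\<lambda>(a,b). gram A (pick S a) (pick S b))"
proof (rule eq_matI)
  have C: "cols_sub A S \<in> carrier_mat m (card S)" by (rule cols_sub_carrier[OF A S])
  fix a b assume "a < dim_row (mat (card S) (card S) (\<lambda>(a,b). gram A (pick S a) (pick S b)))"
    "b < dim_col (mat (card S) (card S) (\<lambda>(a,b). gram A (pick S a) (pick S b)))"
  then have ab: "a < card S" "b < card S" by auto
  show "(transpose_mat (cols_sub A S) * cols_sub A S) $$ (a, b) = mat (card S) (card S) (\<lambda>(a,b). gram A (pick S a) (pick S b)) $$ (a, b)"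
    unfolding GS_index[OF A S ab] using ab by simp
qed (use cols_sub_carrier[OF A S] in auto)

lemma dpp_weight_detS:
  assumes A: "A \<in> carrier_mat m n" and S: "S \<subseteq> {..<n}"
  shows "dpp_weight A S = detS (gram A) S"
proof -
  have fS: "finite S" using S finite_subset by blast
  show ?thesis unfolding dpp_weight_def GS_eq[OF A S]
    by (rule detS_reindex[OF pick_bij[OF fS]])
qed



lemma mat_eq_by_vec:
  fixes A B :: "'a :: comm_ring_1 mat"
  assumes A: "A \<in> carrier_mat nr nc" and B: "B \<in> carrier_mat nr nc"
    and h: "\<And>v. v \<in> carrier_vec nc \<Longrightarrow> A *\<^sub>v v = B *\<^sub>v v"
  shows "A = B"
proof (rule eq_matI)
  fix i j assume i: "i < dim_row B" and j: "j < dim_col B"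
  have "A *\<^sub>v unit_vec nc j = B *\<^sub>v unit_vec nc j" by (rule h) simp
  then have "(A *\<^sub>v unit_vec nc j) $ i = (B *\<^sub>v unit_vec nc j) $ i" by simp
  then show "A $$ (i, j) = B $$ (i, j)" using A B i j by (simp add: scalar_prod_def row_def unit_vec_def sum.delta' atLeast0LessThan if_distrib cong: if_cong)
qed (use A B in auto)

lemma proj_unique:
  fixes P Q :: "real mat"
  assumes P: "P \<in> carrier_mat m m" and Q: "Q \<in> carrier_mat m m"
    and PP: "P * P = P" and QQ: "Q * Q = Q"
    and Pt: "transpose_mat P = P" and Qt: "transpose_mat Q = Q"
    and R: "{P *\<^sub>v v | v. v \<in> carrier_vec m} = {Q *\<^sub>v v | v. v \<in> carrier_vec m}"
  shows "P = Q"
proof -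
  have absorb: "Y * X = X" if X: "X \<in> carrier_mat m m" and Y: "Y \<in> carrier_mat m m" and YY: "Y * Y = Y"
    and RR: "{X *\<^sub>v v | v. v \<in> carrier_vec m} \<subseteq> {Y *\<^sub>v v | v. v \<in> carrier_vec m}" for X Y :: "real mat"
  proof (rule mat_eq_by_vec[of _ m m])
    show "Y * X \<in> carrier_mat m m" using X Y by simp
    show "X \<in> carrier_mat m m" by fact
    fix v :: "real vec" assume v: "v \<in> carrier_vec m"
    have "X *\<^sub>v v \<in> {Y *\<^sub>v v | v. v \<in> carrier_vec m}" using RR v by blast
    then obtain w where w: "w \<in> carrier_vec m" "X *\<^sub>v v = Y *\<^sub>v w" by blast
    have "(Y * X) *\<^sub>v v = Y *\<^sub>v (X *\<^sub>v v)" using X Y v by (simp add: assoc_mult_mat_vec)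
    also have "\<dots> = (Y * Y) *\<^sub>v w" using w Y by (simp add: assoc_mult_mat_vec)
    also have "\<dots> = X *\<^sub>v v" using YY w by simp
    finally show "(Y * X) *\<^sub>v v = X *\<^sub>v v" .
  qed
  have QP: "Q * P = P" by (rule absorb[OF P Q QQ]) (use R in blast)
  have PQ: "P * Q = Q" by (rule absorb[OF Q P PP]) (use R in blast)
  have "P = transpose_mat P" using Pt by simp
  also have "\<dots> = transpose_mat (Q * P)" using QP by simp
  also have "\<dots> = transpose_mat P * transpose_mat Q" using P Q by (simp add: transpose_mult)
  also have "\<dots> = P * Q" using Pt Qt by simp
  also have "\<dots> = Q" by (rule PQ)
  finally show ?thesis .
qed

lemma orth_proj_eq:
  fixes P :: "real mat"
  assumes P: "P \<in> carrier_mat m m" and PP: "P * P = P" and Pt: "transpose_mat P = P"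
    and R: "{P *\<^sub>v v | v. v \<in> carrier_vec m} = V"
  shows "orth_proj m V = P"
  unfolding orth_proj_def
proof (rule the_equality)
  show "P \<in> carrier_mat m m \<and> P * P = P \<and> transpose_mat P = P \<and> {P *\<^sub>v v | v. v \<in> carrier_vec m} = V"
    using assms by auto
  fix Q assume "Q \<in> carrier_mat m m \<and> Q * Q = Q \<and> transpose_mat Q = Q \<and> {Q *\<^sub>v v | v. v \<in> carrier_vec m} = V"
  then show "Q = P" using proj_unique[OF _ P _ PP _ Pt] R by auto
qed



lemma proj_explicit:
  fixes A :: "real mat"
  assumes A: "A \<in> carrier_mat m n" and S: "S \<subseteq> {..<n}"
    and Gi: "Gi \<in> carrier_mat (card S) (card S)"
    and inv1: "Gi * (transpose_mat (cols_sub A S) * cols_sub A S) = 1\<^sub>m (card S)"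
    and inv2: "(transpose_mat (cols_sub A S) * cols_sub A S) * Gi = 1\<^sub>m (card S)"
  shows "proj_S A S = cols_sub A S * Gi * transpose_mat (cols_sub A S)"
proof -
  let ?k = "card S"
  define B where "B = cols_sub A S"
  define G where "G = transpose_mat B * B"
  have B: "B \<in> carrier_mat m ?k" unfolding B_def by (rule cols_sub_carrier[OF A S])
  have Bt: "transpose_mat B \<in> carrier_mat ?k m" using B by simp
  have G: "G \<in> carrier_mat ?k ?k" unfolding G_def using B by simp
  have i1: "Gi * G = 1\<^sub>m ?k" and i2: "G * Gi = 1\<^sub>m ?k" using inv1 inv2 unfolding G_def B_def by auto
  have Gt: "transpose_mat G = G" unfolding G_def using B by (simp add: transpose_mult)
  have Git: "transpose_mat Gi = Gi"
  proof -
    have "transpose_mat Gi * G = transpose_mat Gi * transpose_mat G" using Gt by simp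
    also have "\<dots> = transpose_mat (G * Gi)" using G Gi by (simp add: transpose_mult)
    also have "\<dots> = 1\<^sub>m ?k" using i2 by simp
    finally have e: "transpose_mat Gi * G = 1\<^sub>m ?k" .
    have "transpose_mat Gi = transpose_mat Gi * (G * Gi)" using i2 Gi by simp
    also have "\<dots> = (transpose_mat Gi * G) * Gi" using Gi G by (simp add: assoc_mult_mat)
    also have "\<dots> = Gi" using e Gi by simp
    finally show ?thesis .
  qed
  define P where "P = B * Gi * transpose_mat B"
  have P: "P \<in> carrier_mat m m" unfolding P_def using B Gi by simp
  have PB: "P * B = B"
  proof -
    have "P * B = B * Gi * (transpose_mat B * B)" unfolding P_def
      using assoc_mult_mat[OF _ Bt B, of "B * Gi" m] B Gi by simp
    also have "\<dots> = B * (Gi * G)" using assoc_mult_mat[OF B Gi G] unfolding G_def by simp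
    also have "\<dots> = B" using i1 B by simp
    finally show ?thesis .
  qed
  have PP: "P * P = P"
  proof -
    have BGi: "B * Gi \<in> carrier_mat m ?k" using B Gi by simp
    have "P * P = P * (B * Gi) * transpose_mat B"
      using assoc_mult_mat[OF P BGi Bt] unfolding P_def by simp
    also have "P * (B * Gi) = (P * B) * Gi" using assoc_mult_mat[OF P B Gi] by simp
    also have "(P * B) * Gi * transpose_mat B = B * Gi * transpose_mat B" by (simp only: PB)
    also have "\<dots> = P" by (simp add: P_def)
    finally show ?thesis .
  qed
  have Pt: "transpose_mat P = P"
  proof -
    have BGi: "B * Gi \<in> carrier_mat m ?k" using B Gi by simp
    have "transpose_mat P = transpose_mat (transpose_mat B) * transpose_mat (B * Gi)"
      unfolding P_def by (rule transpose_mult[OF BGi Bt])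
    also have "transpose_mat (B * Gi) = transpose_mat Gi * transpose_mat B" by (rule transpose_mult[OF B Gi])
    also have "transpose_mat (transpose_mat B) * (transpose_mat Gi * transpose_mat B) = B * (Gi * transpose_mat B)"
      unfolding Git by simp
    also have "\<dots> = P" unfolding P_def using assoc_mult_mat[OF B Gi Bt] by simp
    finally show ?thesis .
  qed
  have dB: "dim_col B = ?k" using B by simp
  have R: "{P *\<^sub>v v | v. v \<in> carrier_vec m} = col_span A S"
    unfolding col_span_def B_def[symmetric] dB
  proof
    show "{P *\<^sub>v v | v. v \<in> carrier_vec m} \<subseteq> {B *\<^sub>v x | x. x \<in> carrier_vec ?k}"
    proof
      fix y assume "y \<in> {P *\<^sub>v v | v. v \<in> carrier_vec m}"
      then obtain v where v: "v \<in> carrier_vec m" "y = P *\<^sub>v v" by blast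
      have BGi: "B * Gi \<in> carrier_mat m ?k" using B Gi by simp
      have Btv: "transpose_mat B *\<^sub>v v \<in> carrier_vec ?k" using Bt v by simp
      have "P *\<^sub>v v = (B * Gi) *\<^sub>v (transpose_mat B *\<^sub>v v)"
        unfolding P_def by (rule assoc_mult_mat_vec[OF BGi Bt v(1)])
      also have "\<dots> = B *\<^sub>v (Gi *\<^sub>v (transpose_mat B *\<^sub>v v))" by (rule assoc_mult_mat_vec[OF B Gi Btv])
      finally have "P *\<^sub>v v = B *\<^sub>v (Gi *\<^sub>v (transpose_mat B *\<^sub>v v))" .
      moreover have "Gi *\<^sub>v (transpose_mat B *\<^sub>v v) \<in> carrier_vec ?k" using Gi Btv by simp
      ultimately show "y \<in> {B *\<^sub>v x | x. x \<in> carrier_vec ?k}" using v by blast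
    qed
    show "{B *\<^sub>v x | x. x \<in> carrier_vec ?k} \<subseteq> {P *\<^sub>v v | v. v \<in> carrier_vec m}"
    proof
      fix y assume "y \<in> {B *\<^sub>v x | x. x \<in> carrier_vec ?k}"
      then obtain x where x: "x \<in> carrier_vec ?k" "y = B *\<^sub>v x" by blast
      have "B *\<^sub>v x = (P * B) *\<^sub>v x" using PB by simp
      also have "\<dots> = P *\<^sub>v (B *\<^sub>v x)" using P B x by (simp add: assoc_mult_mat_vec)
      finally have "y = P *\<^sub>v (B *\<^sub>v x)" using x by simp
      moreover have "B *\<^sub>v x \<in> carrier_vec m" using B x by simp
      ultimately show "y \<in> {P *\<^sub>v v | v. v \<in> carrier_vec m}" by blast
    qed
  qed
  have "dim_row A = m" using A by simp
  then have "proj_S A S = orth_proj m (col_span A S)" unfolding proj_S_def by simp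
  also have "\<dots> = P" by (rule orth_proj_eq[OF P PP Pt R])
  finally show ?thesis unfolding P_def B_def .
qed




definition gq :: "real mat \<Rightarrow> nat set \<Rightarrow> real mat \<Rightarrow> nat \<Rightarrow> real" where
  "gq A S Gi j = (\<Sum>a<card S. gram A (pick S a) j * (\<Sum>b<card S. Gi $$ (a,b) * gram A (pick S b) j))"

lemma C_index:
  assumes A: "A \<in> carrier_mat m n" and S: "S \<subseteq> {..<n}" and a: "a < card S" and j: "j < n"
  shows "(transpose_mat (cols_sub A S) * A) $$ (a, j) = gram A (pick S a) j"
proof -
  have B: "cols_sub A S \<in> carrier_mat m (card S)" by (rule cols_sub_carrier[OF A S])
  have fS: "finite S" using S finite_subset by blast
  have pa: "pick S a < n" using pick_bij[OF fS] a S by (auto dest: bij_betwE)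
  have "(transpose_mat (cols_sub A S) * A) $$ (a, j) = (\<Sum>r<m. cols_sub A S $$ (r,a) * A $$ (r,j))"
    using B A a j by (auto simp: scalar_prod_def atLeast0LessThan)
  also have "\<dots> = (\<Sum>r<m. A $$ (r, pick S a) * A $$ (r,j))"
    by (rule sum.cong[OF refl]) (simp add: cols_sub_index[OF A S] a)
  also have "\<dots> = gram A (pick S a) j" using gram_alt[OF A pa j] by simp
  finally show ?thesis .
qed

lemma frob_sq_gram:
  fixes W :: "real mat"
  assumes W: "W \<in> carrier_mat m n"
  shows "frob_sq W = (\<Sum>j<n. (transpose_mat W * W) $$ (j,j))"
proof -
  have "frob_sq W = (\<Sum>i<m. \<Sum>j<n. W $$ (i,j) * W $$ (i,j))"
    unfolding frob_sq_def using W by (simp add: power2_eq_square)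
  also have "\<dots> = (\<Sum>j<n. \<Sum>i<m. W $$ (i,j) * W $$ (i,j))" by (rule sum.swap)
  also have "\<dots> = (\<Sum>j<n. (transpose_mat W * W) $$ (j,j))"
    by (rule sum.cong[OF refl]) (use W in \<open>auto simp: scalar_prod_def atLeast0LessThan\<close>)
  finally show ?thesis .
qed

lemma Er_formula:
  fixes A :: "real mat"
  assumes A: "A \<in> carrier_mat m n" and S: "S \<subseteq> {..<n}"
    and Gi: "Gi \<in> carrier_mat (card S) (card S)"
    and inv1: "Gi * (transpose_mat (cols_sub A S) * cols_sub A S) = 1\<^sub>m (card S)"
    and inv2: "(transpose_mat (cols_sub A S) * cols_sub A S) * Gi = 1\<^sub>m (card S)"
  shows "Er A S = (\<Sum>j<n. gram A j j - gq A S Gi j)"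
proof -
  let ?k = "card S"
  define B where "B = cols_sub A S"
  have B: "B \<in> carrier_mat m ?k" unfolding B_def by (rule cols_sub_carrier[OF A S])
  have Bt: "transpose_mat B \<in> carrier_mat ?k m" using B by simp
  have At: "transpose_mat A \<in> carrier_mat n m" using A by simp
  define P where "P = B * Gi * transpose_mat B"
  have P: "P \<in> carrier_mat m m" unfolding P_def using B Gi by simp
  have projP: "proj_S A S = P" unfolding P_def B_def by (rule proj_explicit[OF A S Gi inv1 inv2])
  have G: "transpose_mat B * B \<in> carrier_mat ?k ?k" using B by simp
  have i1: "Gi * (transpose_mat B * B) = 1\<^sub>m ?k" using inv1 unfolding B_def .
  have PB: "P * B = B"
  proof -
    have "P * B = B * Gi * (transpose_mat B * B)" unfolding P_def
      using assoc_mult_mat[OF _ Bt B, of "B * Gi" m] B Gi by simp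
    also have "\<dots> = B * (Gi * (transpose_mat B * B))" using assoc_mult_mat[OF B Gi G] by simp
    also have "\<dots> = B" using i1 B by simp
    finally show ?thesis .
  qed
  have PP: "P * P = P"
  proof -
    have BGi: "B * Gi \<in> carrier_mat m ?k" using B Gi by simp
    have "P * P = P * (B * Gi) * transpose_mat B"
      using assoc_mult_mat[OF P BGi Bt] unfolding P_def by simp
    also have "P * (B * Gi) = (P * B) * Gi" using assoc_mult_mat[OF P B Gi] by simp
    also have "(P * B) * Gi * transpose_mat B = B * Gi * transpose_mat B" by (simp only: PB)
    also have "\<dots> = P" by (simp add: P_def)
    finally show ?thesis .
  qed
  have Pt: "transpose_mat P = P"
  proof -
    have Gt: "transpose_mat (transpose_mat B * B) = transpose_mat B * B" using B by (simp add: transpose_mult)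
    have i2: "(transpose_mat B * B) * Gi = 1\<^sub>m ?k" using inv2 unfolding B_def .
    have Git: "transpose_mat Gi = Gi"
    proof -
      have "transpose_mat Gi * (transpose_mat B * B) = transpose_mat Gi * transpose_mat (transpose_mat B * B)" using Gt by simp
      also have "\<dots> = transpose_mat ((transpose_mat B * B) * Gi)" using G Gi by (simp add: transpose_mult)
      also have "\<dots> = 1\<^sub>m ?k" using i2 by simp
      finally have e: "transpose_mat Gi * (transpose_mat B * B) = 1\<^sub>m ?k" .
      have "transpose_mat Gi = transpose_mat Gi * ((transpose_mat B * B) * Gi)" using i2 Gi by simp
      also have "\<dots> = (transpose_mat Gi * (transpose_mat B * B)) * Gi" using Gi G by (simp add: assoc_mult_mat)
      also have "\<dots> = Gi" using e Gi by simp
      finally show ?thesis .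
    qed
    have BGi: "B * Gi \<in> carrier_mat m ?k" using B Gi by simp
    have "transpose_mat P = transpose_mat (transpose_mat B) * transpose_mat (B * Gi)"
      unfolding P_def by (rule transpose_mult[OF BGi Bt])
    also have "transpose_mat (B * Gi) = transpose_mat Gi * transpose_mat B" by (rule transpose_mult[OF B Gi])
    also have "transpose_mat (transpose_mat B) * (transpose_mat Gi * transpose_mat B) = B * (Gi * transpose_mat B)"
      unfolding Git by simp
    also have "\<dots> = P" unfolding P_def using assoc_mult_mat[OF B Gi Bt] by simp
    finally show ?thesis .
  qed
  define W where "W = A - P * A"
  have PA: "P * A \<in> carrier_mat m n" using P A by simp
  have W: "W \<in> carrier_mat m n" unfolding W_def by (rule minus_carrier_mat[OF PA])
  have AtP: "transpose_mat A * P \<in> carrier_mat n m" using A P by simp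
  have Wt: "transpose_mat W = transpose_mat A - transpose_mat A * P"
  proof -
    have "transpose_mat W = transpose_mat A - transpose_mat (P * A)"
      unfolding W_def by (rule transpose_minus[OF A PA])
    also have "transpose_mat (P * A) = transpose_mat A * transpose_mat P" by (rule transpose_mult[OF P A])
    finally show ?thesis using Pt by simp
  qed
  have WW: "transpose_mat W * W = transpose_mat A * A - transpose_mat A * (P * A)"
  proof -
    have D: "transpose_mat A - transpose_mat A * P \<in> carrier_mat n m" by (rule minus_carrier_mat[OF AtP])
    have "transpose_mat W * W = (transpose_mat A - transpose_mat A * P) * A - (transpose_mat A - transpose_mat A * P) * (P * A)"
      unfolding Wt unfolding W_def by (rule mult_minus_distrib_mat[OF D A PA])
    also have "(transpose_mat A - transpose_mat A * P) * (P * A) = transpose_mat A * (P * A) - (transpose_mat A * P) * (P * A)"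
      by (rule minus_mult_distrib_mat[OF At AtP PA])
    also have "(transpose_mat A * P) * (P * A) = transpose_mat A * (P * A)"
    proof -
      have "(transpose_mat A * P) * (P * A) = transpose_mat A * (P * (P * A))" using assoc_mult_mat[OF At P PA] by simp
      also have "P * (P * A) = (P * P) * A" using assoc_mult_mat[OF P P A] by simp
      finally show ?thesis using PP by simp
    qed
    also have "transpose_mat A * (P * A) - transpose_mat A * (P * A) = 0\<^sub>m n n" using At PA by simp
    also have "(transpose_mat A - transpose_mat A * P) * A = transpose_mat A * A - (transpose_mat A * P) * A"
      by (rule minus_mult_distrib_mat[OF At AtP A])
    also have "(transpose_mat A * P) * A = transpose_mat A * (P * A)" using assoc_mult_mat[OF At P A] by simp
    finally have e: "transpose_mat W * W = transpose_mat A * A - transpose_mat A * (P * A) - 0\<^sub>m n n" .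
    have X: "transpose_mat A * A - transpose_mat A * (P * A) \<in> carrier_mat n n"
      by (rule minus_carrier_mat) (use At PA in simp)
    have "transpose_mat A * A - transpose_mat A * (P * A) - 0\<^sub>m n n = transpose_mat A * A - transpose_mat A * (P * A)"
      by (rule eq_matI) (use X in auto)
    then show ?thesis using e by simp
  qed
  define C where "C = transpose_mat B * A"
  have C: "C \<in> carrier_mat ?k n" unfolding C_def using B A by simp
  have GiC: "Gi * C \<in> carrier_mat ?k n" using Gi C by simp
  have AtPA: "transpose_mat A * (P * A) = transpose_mat C * (Gi * C)"
  proof -
    have "P * A = B * (Gi * C)"
    proof -
      have BGi: "B * Gi \<in> carrier_mat m ?k" using B Gi by simp
      have "P * A = (B * Gi) * C" unfolding P_def C_def using assoc_mult_mat[OF BGi Bt A] by simp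
      also have "\<dots> = B * (Gi * C)" using assoc_mult_mat[OF B Gi C] by simp
      finally show ?thesis .
    qed
    then have "transpose_mat A * (P * A) = (transpose_mat A * B) * (Gi * C)"
      using assoc_mult_mat[OF At B GiC] by simp
    moreover have "transpose_mat C = transpose_mat A * B" unfolding C_def using transpose_mult[OF Bt A] by simp
    ultimately show ?thesis by simp
  qed
  have diag: "(transpose_mat C * (Gi * C)) $$ (j,j) = gq A S Gi j" if j: "j < n" for j
  proof -
    have "(transpose_mat C * (Gi * C)) $$ (j,j) = (\<Sum>a<?k. C $$ (a,j) * (\<Sum>b<?k. Gi $$ (a,b) * C $$ (b,j)))"
      using C Gi j by (auto simp: scalar_prod_def atLeast0LessThan)
    also have "\<dots> = gq A S Gi j" unfolding gq_def C_def B_def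
      by (intro sum.cong refl arg_cong2[where f="(*)"]) (simp_all add: C_index[OF A S] j)
    finally show ?thesis .
  qed
  have "Er A S = frob_sq W" unfolding Er_def W_def projP ..
  also have "\<dots> = (\<Sum>j<n. (transpose_mat W * W) $$ (j,j))" by (rule frob_sq_gram[OF W])
  also have "\<dots> = (\<Sum>j<n. gram A j j - gq A S Gi j)"
  proof (rule sum.cong[OF refl])
    fix j assume j: "j \<in> {..<n}"
    have "(transpose_mat W * W) $$ (j,j) = (transpose_mat A * A) $$ (j,j) - (transpose_mat A * (P * A)) $$ (j,j)"
      unfolding WW using A PA j by simp
    then show "(transpose_mat W * W) $$ (j,j) = gram A j j - gq A S Gi j"
      unfolding AtPA gram_def using diag j by simp
  qed
  finally show ?thesis .
qed



lemma det_E: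
  fixes v :: "real mat"
  assumes v: "v \<in> carrier_mat k 1"
  shows "det (four_block_mat (1\<^sub>m k) v (0\<^sub>m 1 k) (1\<^sub>m 1)) = 1"
proof -
  let ?E = "four_block_mat (1\<^sub>m k) v (0\<^sub>m 1 k) (1\<^sub>m 1)"
  have E: "?E \<in> carrier_mat (k + 1) (k + 1)" using v by (intro four_block_carrier_mat) auto
  have ut: "upper_triangular ?E"
    unfolding upper_triangular_def using v by auto
  have "det ?E = prod_list (diag_mat ?E)" by (rule det_upper_triangular[OF ut E])
  also have "\<dots> = (\<Prod>i = 0..<dim_row ?E. ?E $$ (i,i))" by (rule prod_list_diag_prod)
  also have "\<dots> = (\<Prod>i = 0..<k+1. (1::real))"
    by (rule prod.cong) (use v in auto)
  finally show ?thesis by simp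
qed

lemma schur_j:
  fixes A :: "real mat"
  assumes A: "A \<in> carrier_mat m n" and S: "S \<subseteq> {..<n}"
    and Gi: "Gi \<in> carrier_mat (card S) (card S)"
    and inv2: "(transpose_mat (cols_sub A S) * cols_sub A S) * Gi = 1\<^sub>m (card S)"
    and j: "j < n"
  shows "det (mat (card S + 1) (card S + 1) (\<lambda>(a,b). gram A (if a < card S then pick S a else j) (if b < card S then pick S b else j)))
       = dpp_weight A S * (gram A j j - gq A S Gi j)"
proof -
  let ?k = "card S"
  let ?f = "\<lambda>a. if a < ?k then pick S a else j"
  have fS: "finite S" using S finite_subset by blast
  have pk: "pick S a < n" if "a < ?k" for a using pick_bij[OF fS] that S by (auto dest: bij_betwE)
  define GS where "GS = mat ?k ?k (\<lambda>(a,b). gram A (pick S a) (pick S b))"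
  define c where "c = mat ?k 1 (\<lambda>(a,b). gram A (pick S a) j)"
  define ct where "ct = mat 1 ?k (\<lambda>(a,b). gram A j (pick S b))"
  define d where "d = mat 1 1 (\<lambda>_. gram A j j)"
  have GSe: "transpose_mat (cols_sub A S) * cols_sub A S = GS" unfolding GS_def by (rule GS_eq[OF A S])
  have GS: "GS \<in> carrier_mat ?k ?k" and c: "c \<in> carrier_mat ?k 1" and ct: "ct \<in> carrier_mat 1 ?k"
    and d: "d \<in> carrier_mat 1 1" unfolding GS_def c_def ct_def d_def by auto
  have i2: "GS * Gi = 1\<^sub>m ?k" using inv2 unfolding GSe .
  define X where "X = four_block_mat GS c ct d"
  have Xe: "mat (?k + 1) (?k + 1) (\<lambda>(a,b). gram A (?f a) (?f b)) = X"
    unfolding X_def GS_def c_def ct_def d_def by (rule eq_matI) auto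
  define v where "v = - (Gi * c)"
  have v: "v \<in> carrier_mat ?k 1" unfolding v_def using Gi c by simp
  define E where "E = four_block_mat (1\<^sub>m ?k) v (0\<^sub>m 1 ?k) (1\<^sub>m 1)"
  have E: "E \<in> carrier_mat (?k + 1) (?k + 1)" unfolding E_def using v by (intro four_block_carrier_mat) auto
  have X: "X \<in> carrier_mat (?k + 1) (?k + 1)" unfolding X_def using GS c ct d by (intro four_block_carrier_mat) auto
  have dE: "det E = 1" unfolding E_def by (rule det_E[OF v])
  define Dm where "Dm = ct * v + d * 1\<^sub>m 1"
  have Dm: "Dm \<in> carrier_mat 1 1" unfolding Dm_def using ct v d by simp
  have XE: "X * E = four_block_mat GS (0\<^sub>m ?k 1) ct Dm"
  proof -
    have "X * E = four_block_mat (GS * 1\<^sub>m ?k + c * 0\<^sub>m 1 ?k) (GS * v + c * 1\<^sub>m 1)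
        (ct * 1\<^sub>m ?k + d * 0\<^sub>m 1 ?k) (ct * v + d * 1\<^sub>m 1)"
      unfolding X_def E_def by (rule mult_four_block_mat[OF GS c ct d]) (use v in auto)
    also have "GS * 1\<^sub>m ?k + c * 0\<^sub>m 1 ?k = GS" using GS c by simp
    also have "ct * 1\<^sub>m ?k + d * 0\<^sub>m 1 ?k = ct" using ct d by simp
    also have "GS * v + c * 1\<^sub>m 1 = 0\<^sub>m ?k 1"
    proof -
      have "GS * (Gi * c) = (GS * Gi) * c" using assoc_mult_mat[OF GS Gi c] by simp
      also have "\<dots> = c" using i2 c by simp
      finally have e: "GS * (Gi * c) = c" .
      have "GS * v + c * 1\<^sub>m 1 = - (GS * (Gi * c)) + c" unfolding v_def using c GS Gi by simp
      also have "\<dots> = - c + c" using e by simp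
      also have "\<dots> = 0\<^sub>m ?k 1" using c by simp
      finally show ?thesis .
    qed
    finally show ?thesis unfolding Dm_def .
  qed
  have "det X = det X * det E" using dE by simp
  also have "\<dots> = det (X * E)" using det_mult[OF X E] by simp
  also have "\<dots> = det GS * det Dm" unfolding XE
    by (rule det_four_block_mat_upper_right_zero[OF GS refl ct Dm])
  also have "det Dm = Dm $$ (0,0)" by (rule det_single[OF Dm])
  also have "Dm $$ (0,0) = gram A j j - gq A S Gi j"
  proof -
    have "Dm $$ (0,0) = d $$ (0,0) - (ct * (Gi * c)) $$ (0,0)"
      unfolding Dm_def v_def using ct c Gi d by simp
    also have "(ct * (Gi * c)) $$ (0,0) = (\<Sum>a<?k. gram A j (pick S a) * (\<Sum>b<?k. Gi $$ (a,b) * gram A (pick S b) j))"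
      unfolding ct_def c_def using Gi by (auto simp: scalar_prod_def atLeast0LessThan)
    also have "\<dots> = gq A S Gi j" unfolding gq_def
      by (rule sum.cong[OF refl]) (simp add: gram_sym[OF A _ j] pk)
    finally show ?thesis unfolding d_def by simp
  qed
  also have "det GS = dpp_weight A S" unfolding dpp_weight_def GSe ..
  finally show ?thesis unfolding Xe by simp
qed




lemma inverse_exists:
  fixes M :: "real mat"
  assumes M: "M \<in> carrier_mat k k" and d: "det M \<noteq> 0"
  obtains Gi where "Gi \<in> carrier_mat k k" "Gi * M = 1\<^sub>m k" "M * Gi = 1\<^sub>m k"
proof -
  have "M \<in> Units (ring_mat TYPE(real) k undefined)" by (rule det_non_zero_imp_unit[OF M d])
  then obtain Gi where "Gi \<in> carrier_mat k k" "Gi * M = 1\<^sub>m k" "M * Gi = 1\<^sub>m k"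
    unfolding Units_def ring_mat_def by auto
  then show ?thesis using that by blast
qed

lemma weight_Er:
  fixes A :: "real mat"
  assumes A: "A \<in> carrier_mat m n" and S: "S \<subseteq> {..<n}"
    and w: "dpp_weight A S \<noteq> 0"
  shows "dpp_weight A S * Er A S = (\<Sum>j\<in>{..<n} - S. detS (gram A) (insert j S))"
proof -
  let ?k = "card S"
  let ?GS = "transpose_mat (cols_sub A S) * cols_sub A S"
  have fS: "finite S" using S finite_subset by blast
  have GS: "?GS \<in> carrier_mat ?k ?k" using cols_sub_carrier[OF A S] by simp
  obtain Gi where Gi: "Gi \<in> carrier_mat ?k ?k" and inv1: "Gi * ?GS = 1\<^sub>m ?k" and inv2: "?GS * Gi = 1\<^sub>m ?k"
    using inverse_exists[OF GS] w unfolding dpp_weight_def by blast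
  define X where "X = (\<lambda>j. mat (?k + 1) (?k + 1) (\<lambda>(a,b). gram A (if a < ?k then pick S a else j) (if b < ?k then pick S b else j)))"
  have "dpp_weight A S * Er A S = (\<Sum>j<n. dpp_weight A S * (gram A j j - gq A S Gi j))"
    unfolding Er_formula[OF A S Gi inv1 inv2] by (simp add: sum_distrib_left)
  also have "\<dots> = (\<Sum>j<n. det (X j))"
    unfolding X_def by (rule sum.cong[OF refl]) (rule schur_j[OF A S Gi inv2, symmetric], simp)
  also have "\<dots> = (\<Sum>j\<in>{..<n} - S. det (X j)) + (\<Sum>j\<in>S. det (X j))"
    by (rule sum.subset_diff[OF S]) simp
  also have "(\<Sum>j\<in>S. det (X j)) = 0"
  proof (rule sum.neutral, rule ballI)
    fix j assume jS: "j \<in> S"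
    define a0 where "a0 = card {a\<in>S. a < j}"
    have pa0: "pick S a0 = j" unfolding a0_def by (rule pick_card_in_set[OF jS])
    have "{a\<in>S. a < j} \<subset> S" using jS by blast
    then have a0k: "a0 < ?k" unfolding a0_def using fS by (simp add: psubset_card_mono)
    show "det (X j) = 0"
    proof (rule det_identical_rows[of _ "?k + 1" a0 ?k])
      show "X j \<in> carrier_mat (?k + 1) (?k + 1)" unfolding X_def by simp
      show "a0 \<noteq> ?k" using a0k by simp
      show "a0 < ?k + 1" "?k < ?k + 1" using a0k by auto
      show "row (X j) a0 = row (X j) ?k"
        by (rule eq_vecI) (use a0k pa0 in \<open>auto simp: X_def\<close>)
    qed
  qed
  also have "(\<Sum>j\<in>{..<n} - S. det (X j)) = (\<Sum>j\<in>{..<n} - S. detS (gram A) (insert j S))"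
  proof (rule sum.cong[OF refl])
    fix j assume j: "j \<in> {..<n} - S"
    let ?f = "\<lambda>a. if a < ?k then pick S a else j"
    have pb: "bij_betw (pick S) {..<?k} S" by (rule pick_bij[OF fS])
    have bij: "bij_betw ?f {..<?k + 1} (insert j S)"
    proof (rule bij_betw_imageI)
      show "inj_on ?f {..<?k + 1}"
      proof (rule inj_onI)
        fix a b assume a: "a \<in> {..<?k + 1}" and b: "b \<in> {..<?k + 1}" and e: "?f a = ?f b"
        have inS: "pick S x \<in> S" if "x < ?k" for x using pb that by (auto dest: bij_betwE)
        show "a = b"
        proof (cases "a < ?k")
          case True
          show ?thesis
          proof (cases "b < ?k")
            case True
            then show ?thesis using \<open>a < ?k\<close> e pb unfolding bij_betw_def inj_on_def by auto
          next
            case False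
            then show ?thesis using True e inS j by auto
          qed
        next
          case False
          then have ak: "a = ?k" using a by simp
          show ?thesis
          proof (cases "b < ?k")
            case True
            then show ?thesis using False e inS j by auto
          next
            case False then show ?thesis using b ak by simp
          qed
        qed
      qed
      show "?f ` {..<?k + 1} = insert j S"
      proof -
        have "{..<?k + 1} = insert ?k {..<?k}" by auto
        then have "?f ` {..<?k + 1} = insert (?f ?k) (?f ` {..<?k})" by (simp only: image_insert)
        also have "?f ?k = j" by simp
        also have "?f ` {..<?k} = pick S ` {..<?k}" by (rule image_cong) auto
        also have "\<dots> = S" using pb by (simp add: bij_betw_def)
        finally show ?thesis .
      qed
    qed
    show "det (X j) = detS (gram A) (insert j S)"
      unfolding X_def by (rule detS_reindex[OF bij])
  qed
  finally show ?thesis by simp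
qed



lemma real_vec_self_zero:
  fixes w :: "real vec"
  assumes "w \<in> carrier_vec k" and "w \<bullet> w = 0"
  shows "w = 0\<^sub>v k"
proof -
  have "w \<bullet>c w = w \<bullet> w" by (simp add: scalar_prod_def)
  then show ?thesis using conjugate_square_eq_0_vec[OF assms(1)] assms(2) by simp
qed

lemma GS_nonzero:
  fixes A :: "real mat"
  assumes A: "A \<in> carrier_mat m n" and S: "S \<subseteq> {..<n}"
    and dG: "det (transpose_mat A * A) \<noteq> 0"
  shows "dpp_weight A S \<noteq> 0"
proof
  assume w0: "dpp_weight A S = 0"
  let ?k = "card S"
  define B where "B = cols_sub A S"
  have fS: "finite S" using S finite_subset by blast
  have pb: "bij_betw (pick S) {..<?k} S" by (rule pick_bij[OF fS])
  have pk: "pick S a < n" if "a < ?k" for a using pb that S by (auto dest: bij_betwE)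
  have B: "B \<in> carrier_mat m ?k" unfolding B_def by (rule cols_sub_carrier[OF A S])
  define Sel where "Sel = mat n ?k (\<lambda>(i,a). if i = pick S a then (1::real) else 0)"
  have Sel: "Sel \<in> carrier_mat n ?k" unfolding Sel_def by simp
  have BAS: "B = A * Sel"
  proof (rule eq_matI)
    fix r a assume r: "r < dim_row (A * Sel)" and a: "a < dim_col (A * Sel)"
    then have r': "r < m" and a': "a < ?k" using A Sel by auto
    have "(A * Sel) $$ (r,a) = (\<Sum>i<n. A $$ (r,i) * (if i = pick S a then 1 else 0))"
      using A Sel r' a' by (auto simp: scalar_prod_def atLeast0LessThan Sel_def)
    also have "\<dots> = A $$ (r, pick S a)"
      using pk[OF a'] by (simp add: if_distrib sum.delta' cong: if_cong)
    also have "\<dots> = B $$ (r,a)" unfolding B_def using cols_sub_index[OF A S r' a'] by simp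
    finally show "B $$ (r,a) = (A * Sel) $$ (r,a)" by simp
  qed (use A B Sel in auto)
  have GS: "transpose_mat B * B \<in> carrier_mat ?k ?k" using B by simp
  have "det (transpose_mat B * B) = 0" using w0 unfolding dpp_weight_def B_def .
  then obtain v where v: "v \<in> carrier_vec ?k" "v \<noteq> 0\<^sub>v ?k" "(transpose_mat B * B) *\<^sub>v v = 0\<^sub>v ?k"
    using det_0_iff_vec_prod_zero_field[OF GS] by blast
  have Bv: "B *\<^sub>v v \<in> carrier_vec m" using B v by simp
  have "(B *\<^sub>v v) \<bullet> (B *\<^sub>v v) = (transpose_mat B *\<^sub>v (B *\<^sub>v v)) \<bullet> v"
    using transpose_vec_mult_scalar[OF B v(1) Bv] by simp
  also have "transpose_mat B *\<^sub>v (B *\<^sub>v v) = (transpose_mat B * B) *\<^sub>v v"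
    using B v by (simp add: assoc_mult_mat_vec)
  also have "\<dots> \<bullet> v = 0" using v by simp
  finally have Bv0: "B *\<^sub>v v = 0\<^sub>v m" by (rule real_vec_self_zero[OF Bv])
  define u where "u = Sel *\<^sub>v v"
  have u: "u \<in> carrier_vec n" unfolding u_def using Sel v by simp
  have Au: "A *\<^sub>v u = 0\<^sub>v m" unfolding u_def using Bv0 BAS A Sel v by (simp add: assoc_mult_mat_vec)
  have Gu: "(transpose_mat A * A) *\<^sub>v u = 0\<^sub>v n"
  proof -
    have z: "transpose_mat A *\<^sub>v 0\<^sub>v m = 0\<^sub>v n" by (rule eq_vecI) (use A in \<open>auto simp: scalar_prod_def\<close>)
    show ?thesis using Au A u z by (simp add: assoc_mult_mat_vec)
  qed
  have u0: "u \<noteq> 0\<^sub>v n"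
  proof
    assume "u = 0\<^sub>v n"
    have "v = 0\<^sub>v ?k"
    proof (rule eq_vecI)
      fix a assume a: "a < dim_vec (0\<^sub>v ?k)"
      then have a': "a < ?k" by simp
      have "u $ pick S a = (\<Sum>b<?k. (if pick S a = pick S b then 1 else 0) * v $ b)"
        unfolding u_def using Sel v pk[OF a'] by (auto simp: scalar_prod_def atLeast0LessThan Sel_def)
      also have "\<dots> = (\<Sum>b<?k. (if b = a then v $ b else 0))"
      proof (rule sum.cong[OF refl])
        fix b assume "b \<in> {..<?k}"
        then have "pick S a = pick S b \<longleftrightarrow> b = a" using pb a' unfolding bij_betw_def inj_on_def by auto
        then show "(if pick S a = pick S b then 1 else 0) * v $ b = (if b = a then v $ b else 0)" by simp
      qed
      also have "\<dots> = v $ a" using a' by (simp add: sum.delta')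
      finally show "v $ a = 0\<^sub>v ?k $ a" using \<open>u = 0\<^sub>v n\<close> pk[OF a'] a' by simp
    qed (use v in auto)
    then show False using v by simp
  qed
  have GG: "transpose_mat A * A \<in> carrier_mat n n" using A by simp
  have "det (transpose_mat A * A) = 0"
    using det_0_iff_vec_prod_zero_field[OF GG] u u0 Gu by blast
  then show False using dG by simp
qed

lemma detG_eq:
  fixes A :: "real mat"
  assumes A: "A \<in> carrier_mat m n"
  shows "det (transpose_mat A * A) = detS (gram A) {..<n}"
proof -
  have "transpose_mat A * A = mat n n (\<lambda>(a,b). gram A (id a) (id b))"
    by (rule eq_matI) (use A in \<open>auto simp: gram_def\<close>)
  moreover have "bij_betw id {..<n} {..<n}" by simp
  ultimately show ?thesis using detS_reindex[of id n "{..<n}" "gram A"] by simp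
qed



lemma ksubsets_nonempty: "k \<le> n \<Longrightarrow> {..<k} \<in> ksubsets n k"
  unfolding ksubsets_def by auto

lemma esym_pos:
  assumes pos: "\<And>i. i < n \<Longrightarrow> 0 < \<mu> i" and kn: "k \<le> n"
  shows "0 < esym \<mu> n k"
proof -
  have "0 < (\<Sum>X\<in>ksubsets n k. \<Prod>i\<in>X. \<mu> i)"
  proof (rule sum_pos2[of _ "{..<k}"])
    show "finite (ksubsets n k)" by simp
    show "{..<k} \<in> ksubsets n k" using kn by (rule ksubsets_nonempty)
    show "0 < (\<Prod>i\<in>{..<k}. \<mu> i)" by (rule prod_pos) (use pos kn in auto)
    fix X assume "X \<in> ksubsets n k"
    then show "0 \<le> (\<Prod>i\<in>X. \<mu> i)" unfolding ksubsets_def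
      by (intro prod_nonneg) (use pos in \<open>auto intro: less_imp_le\<close>)
  qed
  then show ?thesis unfolding esym_def .
qed

lemma ksubsets_full: "ksubsets n n = {{..<n}}"
proof
  show "ksubsets n n \<subseteq> {{..<n}}"
  proof
    fix S assume "S \<in> ksubsets n n"
    then have "S \<subseteq> {..<n}" "card S = card {..<n}" unfolding ksubsets_def by auto
    then have "S = {..<n}" by (intro card_subset_eq) auto
    then show "S \<in> {{..<n}}" by simp
  qed
qed (auto simp: ksubsets_def)

lemma expect_formula:
  fixes A :: "real mat"
  assumes A: "A \<in> carrier_mat m n"
    and ev: "mset (map lam [1..<n+1]) = proots (char_poly (transpose_mat A * A))"
    and pos: "\<And>i. 1 \<le> i \<Longrightarrow> i \<le> n \<Longrightarrow> 0 < lam i"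
    and kn: "k < n"
  shows "kDPP_expect A k (Er A) = real (Suc k) * esym (\<lambda>i. lam (Suc i)) n (Suc k) / esym (\<lambda>i. lam (Suc i)) n k"
proof -
  let ?mu = "\<lambda>i. lam (Suc i)"
  let ?G = "transpose_mat A * A"
  have G: "?G \<in> carrier_mat n n" using A by simp
  have gr: "(\<lambda>a b. ?G $$ (a,b)) = gram A" unfolding gram_def by (simp add: fun_eq_iff)
  have minors: "(\<Sum>X\<in>ksubsets n j. detS (gram A) X) = esym ?mu n j" if "j \<le> n" for j
    using sum_minors[OF G ev that] unfolding gr esym_def .
  have dG: "det ?G \<noteq> 0"
  proof -
    have "det ?G = (\<Sum>X\<in>ksubsets n n. detS (gram A) X)" unfolding ksubsets_full detG_eq[OF A] by simp
    also have "\<dots> = esym ?mu n n" by (rule minors) simp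
    finally show ?thesis using esym_pos[of n ?mu n] pos by simp
  qed
  have dc: "dim_col A = n" using A by simp
  have wS: "dpp_weight A S \<noteq> 0" if "S \<in> ksubsets n k" for S
    using GS_nonzero[OF A _ dG] that unfolding ksubsets_def by auto
  have den: "(\<Sum>S\<in>ksubsets n k. dpp_weight A S) = esym ?mu n k"
  proof -
    have "(\<Sum>S\<in>ksubsets n k. dpp_weight A S) = (\<Sum>S\<in>ksubsets n k. detS (gram A) S)"
      by (rule sum.cong[OF refl]) (use dpp_weight_detS[OF A] in \<open>auto simp: ksubsets_def\<close>)
    also have "\<dots> = esym ?mu n k" by (rule minors) (use kn in simp)
    finally show ?thesis .
  qed
  have num: "(\<Sum>S\<in>ksubsets n k. dpp_weight A S * Er A S) = real (Suc k) * esym ?mu n (Suc k)"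
  proof -
    have "(\<Sum>S\<in>ksubsets n k. dpp_weight A S * Er A S) = (\<Sum>S\<in>ksubsets n k. \<Sum>j\<in>{..<n} - S. detS (gram A) (insert j S))"
      by (rule sum.cong[OF refl]) (use weight_Er[OF A] wS in \<open>auto simp: ksubsets_def\<close>)
    also have "\<dots> = (\<Sum>T\<in>ksubsets n (Suc k). \<Sum>i\<in>T. detS (gram A) T)"
      by (rule pair_count)
    also have "\<dots> = (\<Sum>T\<in>ksubsets n (Suc k). real (Suc k) * detS (gram A) T)"
      by (rule sum.cong[OF refl]) (auto simp: ksubsets_def)
    also have "\<dots> = real (Suc k) * esym ?mu n (Suc k)"
      using minors[of "Suc k"] kn by (simp add: sum_distrib_left[symmetric])
    finally show ?thesis .
  qed
  show ?thesis unfolding kDPP_expect_def dc num den ..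
qed



lemma ratio_bound_w:
  fixes \<mu> :: "nat \<Rightarrow> real"
  assumes pos: "\<And>i. i < n \<Longrightarrow> 0 < \<mu> i"
    and mono: "\<And>i j. i \<le> j \<Longrightarrow> j < n \<Longrightarrow> \<mu> j \<le> \<mu> i"
    and kn: "k < n" and w1: "1 \<le> w" and wk: "w \<le> k"
    and rho: "\<mu> (k - w) / \<mu> (k + min (n-k) w - 1) \<le> \<rho>"
  shows "real (Suc k) * esym \<mu> n (Suc k) / esym \<mu> n k / (\<Sum>i\<in>{k..<n}. \<mu> i) \<le> real (Suc k) / real (w + 1) * (1 + \<rho>)"
proof -
  let ?s = "min (n-k) w"
  let ?T = "\<Sum>i\<in>{k..<n}. \<mu> i"
  let ?e1 = "esym \<mu> n (Suc k)" and ?e0 = "esym \<mu> n k"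
  have nn: "\<And>i. i < n \<Longrightarrow> 0 \<le> \<mu> i" using pos less_imp_le by blast
  have s1: "1 \<le> ?s" using kn w1 by simp
  have skn: "k + ?s \<le> n" using kn by (auto simp: min_def)
  have e0: "0 < ?e0" by (rule esym_pos) (use pos kn in auto)
  have e1: "0 \<le> ?e1" using esym_pos[of n \<mu> "Suc k"] pos kn by (simp add: less_imp_le)
  have step: "real (w + 1) * ?e1 \<le> ?e0 * (?T + real ?s * \<mu> (k - w))"
    by (rule esym_step[OF nn mono kn wk]) auto
  define b where "b = \<mu> (k + ?s - 1)"
  have "k + ?s - 1 < n" using s1 skn by linarith
  then have b: "0 < b" unfolding b_def by (rule pos)
  have Tb: "real ?s * b \<le> ?T"
  proof -
    have "real ?s * b = (\<Sum>i\<in>{k..<k + ?s}. b)" by simp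
    also have "\<dots> \<le> (\<Sum>i\<in>{k..<k + ?s}. \<mu> i)"
      by (rule sum_mono) (use mono skn s1 in \<open>auto simp: b_def\<close>)
    also have "\<dots> \<le> ?T" by (rule sum_mono2) (use nn skn in auto)
    finally show ?thesis .
  qed
  have "0 < real ?s" using s1 kn by simp
  then have "0 < real ?s * b" using b by (rule mult_pos_pos)
  then have T0: "0 < ?T" using Tb by linarith
  have rr: "\<mu> (k - w) \<le> \<rho> * b" using rho b unfolding b_def by (simp add: divide_le_eq)
  have "0 < \<mu> (k - w)" using kn by (intro pos) simp
  then have "0 \<le> \<mu> (k - w) / \<mu> (k + ?s - 1)" using b unfolding b_def by simp
  then have rho0: "0 \<le> \<rho>" using rho by linarith
  have "real ?s * \<mu> (k - w) \<le> real ?s * (\<rho> * b)" using rr by (simp add: mult_left_mono)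
  also have "\<dots> = \<rho> * (real ?s * b)" by simp
  also have "\<dots> \<le> \<rho> * ?T" using Tb rho0 by (simp add: mult_left_mono)
  finally have "?T + real ?s * \<mu> (k - w) \<le> ?T * (1 + \<rho>)" by (simp add: algebra_simps)
  then have "?e0 * (?T + real ?s * \<mu> (k - w)) \<le> ?e0 * (?T * (1 + \<rho>))"
    using e0 by (intro mult_left_mono) auto
  then have "real (w + 1) * ?e1 \<le> ?e0 * (?T * (1 + \<rho>))"
    using step by linarith
  then have "?e1 \<le> ?e0 * ?T * (1 + \<rho>) / real (w + 1)"
    by (simp add: field_simps)
  then have "?e1 / ?e0 / ?T \<le> (1 + \<rho>) / real (w + 1)"
    using e0 T0 by (simp add: field_simps)
  then have "real (Suc k) * (?e1 / ?e0 / ?T) \<le> real (Suc k) * ((1 + \<rho>) / real (w + 1))"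
    by (rule mult_left_mono) simp
  then show ?thesis by (simp add: field_simps)
qed

lemma ratio_bound_0:
  fixes \<mu> :: "nat \<Rightarrow> real"
  assumes pos: "\<And>i. i < n \<Longrightarrow> 0 < \<mu> i"
    and mono: "\<And>i j. i \<le> j \<Longrightarrow> j < n \<Longrightarrow> \<mu> j \<le> \<mu> i"
    and kn: "k < n"
  shows "real (Suc k) * esym \<mu> n (Suc k) / esym \<mu> n k / (\<Sum>i\<in>{k..<n}. \<mu> i) \<le> real (Suc k)"
proof -
  let ?T = "\<Sum>i\<in>{k..<n}. \<mu> i"
  let ?e1 = "esym \<mu> n (Suc k)" and ?e0 = "esym \<mu> n k"
  have nn: "\<And>i. i < n \<Longrightarrow> 0 \<le> \<mu> i" using pos less_imp_le by blast
  have e0: "0 < ?e0" by (rule esym_pos) (use pos kn in auto)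
  have step: "real (0 + 1) * ?e1 \<le> ?e0 * (?T + real (min (n-k) 0) * \<mu> (k - 0))"
    by (rule esym_step[OF nn mono kn]) auto
  have T0: "0 < ?T" using pos kn by (intro sum_pos) auto
  have "?e1 / ?e0 / ?T \<le> 1" using step e0 T0 by (simp add: field_simps)
  then have "real (Suc k) * (?e1 / ?e0 / ?T) \<le> real (Suc k) * 1" by (rule mult_left_mono) simp
  then show ?thesis by simp
qed



lemma exp2_le: "exp (2::real) \<le> 9"
proof -
  have "exp (2::real) = exp 1 * exp 1" by (simp add: exp_add[symmetric])
  also have "\<dots> \<le> 3 * 3" using exp_le by (intro mult_mono) auto
  finally show ?thesis by simp
qed

lemma exp4_le: "exp (4::real) \<le> 81"
proof -
  have "exp (4::real) = exp 2 * exp 2" by (simp add: exp_add[symmetric])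
  also have "\<dots> \<le> 9 * 9" using exp2_le by (intro mult_mono) auto
  finally show ?thesis by simp
qed

lemma poly_power_bound:
  fixes p x :: real
  assumes p: "1 < p" and x0: "0 \<le> x" and x: "x \<le> 1 + 2 / p"
  shows "x powr p \<le> exp 2"
proof -
  have "x powr p \<le> (1 + 2 / p) powr p" by (rule powr_mono2) (use p x0 x in auto)
  also have "(1 + 2 / p) powr p = exp (p * ln (1 + 2 / p))"
  proof -
    have "0 < 2 / p" using p by simp
    then have "1 + 2 / p \<noteq> 0" by linarith
    then show ?thesis unfolding powr_def by (simp add: mult.commute)
  qed
  also have "\<dots> \<le> exp (p * (2 / p))"
  proof -
    have "ln (1 + 2 / p) \<le> 2 / p" by (rule ln_add_one_self_le_self) (use p in simp)
    then have "p * ln (1 + 2 / p) \<le> p * (2 / p)" by (rule mult_left_mono) (use p in auto)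
    then show ?thesis by simp
  qed
  also have "p * (2 / p) = 2" using p by simp
  finally show ?thesis .
qed

lemma poly_ratio:
  fixes lam :: "nat \<Rightarrow> real"
  assumes p: "1 < p" and c1: "0 < c1" and c12: "c1 \<le> c2"
    and bnd: "\<And>i. 1 \<le> i \<Longrightarrow> i \<le> n \<Longrightarrow> c1 * real i powr (-p) \<le> lam i \<and> lam i \<le> c2 * real i powr (-p)"
    and w1: "1 \<le> w" and wk: "w \<le> k" and kn: "k < n"
    and wp: "real w * (p + 1) \<le> real k"
  shows "lam (Suc (k - w)) / lam (Suc (k + min (n-k) w - 1)) \<le> c2 / c1 * exp 2"
proof -
  let ?s = "min (n-k) w"
  define a where "a = real (Suc (k - w))"
  define b where "b = real (Suc (k + ?s - 1))"
  have s1: "1 \<le> ?s" using w1 kn by simp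
  have bkw: "b \<le> real k + real w" unfolding b_def using s1 by (simp add: min_def)
  have a_eq: "a = real k - real w + 1" unfolding a_def using wk by simp
  have a0: "0 < a" unfolding a_def by simp
  have b0: "0 < b" unfolding b_def by simp
  have sn: "Suc (k + ?s - 1) \<le> n" using s1 kn by (auto simp: min_def)
  have num: "lam (Suc (k - w)) \<le> c2 * a powr (-p)" unfolding a_def using bnd[of "Suc (k - w)"] kn wk by simp
  have den: "c1 * b powr (-p) \<le> lam (Suc (k + ?s - 1))" unfolding b_def using bnd[of "Suc (k + ?s - 1)"] sn by simp
  have den0: "0 < c1 * b powr (-p)" using c1 b0 by simp
  have numnn: "0 \<le> c2 * a powr (-p)" using c1 c12 by simp
  have "lam (Suc (k - w)) / lam (Suc (k + ?s - 1)) \<le> (c2 * a powr (-p)) / (c1 * b powr (-p))"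
    by (rule frac_le[OF numnn num den0 den])
  also have "(c2 * a powr (-p)) / (c1 * b powr (-p)) = c2 / c1 * (b / a) powr p"
    using a0 b0 c1 by (simp add: powr_minus powr_divide field_simps)
  also have "(b / a) powr p \<le> exp 2"
  proof (rule poly_power_bound[OF p])
    show "0 \<le> b / a" using a0 b0 by simp
    have "b \<le> (1 + 2 / p) * a"
    proof -
      have "real k + real w \<le> (1 + 2 / p) * (real k - real w)"
      proof -
        have "real w * (p + 1) * 2 \<le> real k * 2" using wp by simp
        then have "real w * 2 * p + real w * 2 \<le> real k * 2" by (simp add: algebra_simps)
        then have "(real w * 2 * p + real w * 2) / p \<le> real k * 2 / p" using p by (simp add: divide_right_mono)
        then have "real w * 2 + real w * 2 / p \<le> real k * 2 / p" using p by (simp add: field_simps)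
        moreover have "(1 + 2 / p) * (real k - real w) = real k - real w + real k * 2 / p - real w * 2 / p"
          using p by (simp add: field_simps)
        ultimately show ?thesis by linarith
      qed
      also have "\<dots> \<le> (1 + 2 / p) * a" unfolding a_eq using p by (intro mult_left_mono) auto
      finally show ?thesis using bkw by linarith
    qed
    then show "b / a \<le> 1 + 2 / p" using a0 by (simp add: divide_le_eq)
  qed
  then have "c2 / c1 * (b / a) powr p \<le> c2 / c1 * exp 2" using c1 c12 by (intro mult_left_mono) auto
  finally show ?thesis .
qed

lemma exp_ratio:
  fixes lam :: "nat \<Rightarrow> real"
  assumes d0: "0 < \<delta>" and dh: "\<delta> < 1/2" and c1: "0 < c1" and c12: "c1 \<le> c2"
    and bnd: "\<And>i. 1 \<le> i \<Longrightarrow> i \<le> n \<Longrightarrow> c1 * (1 - \<delta>) ^ i \<le> lam i \<and> lam i \<le> c2 * (1 - \<delta>) ^ i"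
    and w1: "1 \<le> w" and wk: "w \<le> k" and kn: "k < n"
    and wd: "real w * \<delta> \<le> 1"
  shows "lam (Suc (k - w)) / lam (Suc (k + min (n-k) w - 1)) \<le> c2 / c1 * exp 4"
proof -
  let ?s = "min (n-k) w"
  let ?q = "1 - \<delta>"
  have q0: "0 < ?q" and q1: "?q \<le> 1" using d0 dh by auto
  have s1: "1 \<le> ?s" using w1 kn by simp
  have sn: "Suc (k + ?s - 1) \<le> n" using s1 kn by (auto simp: min_def)
  have num: "lam (Suc (k - w)) \<le> c2 * ?q ^ Suc (k - w)" using bnd[of "Suc (k - w)"] kn wk by simp
  have den: "c1 * ?q ^ Suc (k + ?s - 1) \<le> lam (Suc (k + ?s - 1))" using bnd[of "Suc (k + ?s - 1)"] sn by simp
  have den0: "0 < c1 * ?q ^ Suc (k + ?s - 1)" using c1 q0 by simp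
  have numnn: "0 \<le> c2 * ?q ^ Suc (k - w)" using c1 c12 q0 by simp
  have "lam (Suc (k - w)) / lam (Suc (k + ?s - 1)) \<le> (c2 * ?q ^ Suc (k - w)) / (c1 * ?q ^ Suc (k + ?s - 1))"
    by (rule frac_le[OF numnn num den0 den])
  also have "\<dots> = c2 / c1 * (?q ^ Suc (k - w) / ?q ^ Suc (k + ?s - 1))" by simp
  finally have R1: "lam (Suc (k - w)) / lam (Suc (k + ?s - 1)) \<le> c2 / c1 * (?q ^ Suc (k - w) / ?q ^ Suc (k + ?s - 1))" .
  have "?q ^ Suc (k - w) / ?q ^ Suc (k + ?s - 1) \<le> 1 / ?q ^ (2 * w)"
  proof -
    have "?q ^ Suc (k - w) * ?q ^ (2 * w) = ?q ^ (Suc (k - w) + 2 * w)" by (simp add: power_add)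
    also have "\<dots> \<le> ?q ^ Suc (k + ?s - 1)"
      by (rule power_decreasing) (use q0 q1 wk s1 in \<open>auto simp: min_def\<close>)
    finally have "?q ^ Suc (k - w) * ?q ^ (2 * w) \<le> ?q ^ Suc (k + ?s - 1)" .
    then show ?thesis using q0 by (simp add: field_simps)
  qed
  also have "1 / ?q ^ (2 * w) \<le> exp 4"
  proof -
    have lnq: "- (2 * \<delta>) \<le> ln ?q"
    proof -
      have "- \<delta> - 2 * \<delta>\<^sup>2 \<le> ln ?q" by (rule ln_one_minus_pos_lower_bound) (use d0 dh in auto)
      moreover have "2 * \<delta>\<^sup>2 \<le> \<delta>" using d0 dh by (simp add: power2_eq_square)
      ultimately show ?thesis by linarith
    qed
    have "exp (real (2 * w) * ln ?q) = exp (ln ?q) ^ (2 * w)" by (rule exp_of_nat_mult)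
    then have "?q ^ (2 * w) = exp (real (2 * w) * ln ?q)" using q0 by simp
    also have "exp (real (2 * w) * ln ?q) \<ge> exp (-4)"
    proof -
      have h1: "real w * ln ?q \<ge> real w * (- (2 * \<delta>))" using lnq by (intro mult_left_mono) auto
      have h2: "real w * (- (2 * \<delta>)) = - 2 * (real w * \<delta>)" by simp
      have "real w * ln ?q \<ge> -2" using h1 h2 wd by linarith
      then have "real (2 * w) * ln ?q \<ge> -4" by simp
      then show ?thesis by simp
    qed
    finally have "exp (-4) \<le> ?q ^ (2 * w)" .
    moreover have "0 < exp (-4::real)" by simp
    moreover have "0 < ?q ^ (2 * w)" using q0 by simp
    ultimately have "1 / ?q ^ (2 * w) \<le> 1 / exp (-4)" by (intro divide_left_mono) (auto intro: mult_pos_pos)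
    also have "1 / exp (-4::real) = exp 4" by (simp add: exp_minus field_simps)
    finally show ?thesis .
  qed
  finally have "c2 / c1 * (?q ^ Suc (k - w) / ?q ^ Suc (k + ?s - 1)) \<le> c2 / c1 * exp 4"
    using c1 c12 by (intro mult_left_mono) auto
  then show ?thesis using R1 by linarith
qed



lemma main_bounds:
  fixes A :: "real mat"
  assumes A: "A \<in> carrier_mat m n" and se: "is_sorted_eigs A lam"
    and posa: "\<forall>i. 1 \<le> i \<longrightarrow> i \<le> n \<longrightarrow> 0 < lam i"
    and kn: "k < n"
  shows "kDPP_expect A k (Er A) / OPT A lam k \<le> real (Suc k)"
    and "\<And>w \<rho>. 1 \<le> w \<Longrightarrow> w \<le> k \<Longrightarrow> lam (Suc (k - w)) / lam (Suc (k + min (n-k) w - 1)) \<le> \<rho> \<Longrightarrow>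
          kDPP_expect A k (Er A) / OPT A lam k \<le> real (Suc k) / real (w + 1) * (1 + \<rho>)"
proof -
  have pos: "\<And>i. 1 \<le> i \<Longrightarrow> i \<le> n \<Longrightarrow> 0 < lam i" using posa by blast
  let ?mu = "\<lambda>i. lam (Suc i)"
  have dc: "dim_col A = n" using A by simp
  have ev: "mset (map lam [1..<n+1]) = proots (char_poly (transpose_mat A * A))"
    using se unfolding is_sorted_eigs_def dc by simp
  have monol: "\<And>i j. 1 \<le> i \<Longrightarrow> i \<le> j \<Longrightarrow> j \<le> n \<Longrightarrow> lam j \<le> lam i"
    using se unfolding is_sorted_eigs_def dc by blast
  have mpos: "\<And>i. i < n \<Longrightarrow> 0 < ?mu i" using pos by simp
  have mmono: "\<And>i j. i \<le> j \<Longrightarrow> j < n \<Longrightarrow> ?mu j \<le> ?mu i" using monol by simp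
  have E: "kDPP_expect A k (Er A) = real (Suc k) * esym ?mu n (Suc k) / esym ?mu n k"
    by (rule expect_formula[OF A ev _ kn]) (use pos in auto)
  have O: "OPT A lam k = (\<Sum>i\<in>{k..<n}. ?mu i)"
  proof -
    have "(\<Sum>i\<in>{k..<n}. ?mu i) = (\<Sum>i\<in>Suc ` {k..<n}. lam i)" by (subst sum.reindex) auto
    also have "Suc ` {k..<n} = {k<..n}" by (auto simp: image_Suc_atLeastLessThan)
    finally show ?thesis unfolding OPT_def dc by simp
  qed
  have R: "kDPP_expect A k (Er A) / OPT A lam k = real (Suc k) * esym ?mu n (Suc k) / esym ?mu n k / (\<Sum>i\<in>{k..<n}. ?mu i)"
    unfolding E O ..
  show "kDPP_expect A k (Er A) / OPT A lam k \<le> real (Suc k)"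
    unfolding R by (rule ratio_bound_0[OF mpos mmono kn])
  fix w \<rho> assume w1: "1 \<le> w" and wk: "w \<le> k" and r: "lam (Suc (k - w)) / lam (Suc (k + min (n-k) w - 1)) \<le> \<rho>"
  show "kDPP_expect A k (Er A) / OPT A lam k \<le> real (Suc k) / real (w + 1) * (1 + \<rho>)"
    unfolding R by (rule ratio_bound_w[OF mpos mmono kn w1 wk r])
qed

theorem theorem2:
  shows "\<exists>c::real. \<forall>(m::nat) (n::nat) (A::real mat) (lam::nat \<Rightarrow> real) (c1::real) (c2::real) (k::nat).
    A \<in> carrier_mat m n \<longrightarrow> is_sorted_eigs A lam \<longrightarrow> 0 < c1 \<longrightarrow> c1 \<le> c2 \<longrightarrow>
    1 \<le> k \<longrightarrow> k \<le> n - 1 \<longrightarrow>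
    ((\<forall>p::real. p > 1 \<longrightarrow>
        (\<forall>i\<in>{1..n}. c1 * real i powr (-p) \<le> lam i \<and> lam i \<le> c2 * real i powr (-p)) \<longrightarrow>
        kDPP_expect A k (Er A) / OPT A lam k \<le> c * (c2 / c1) * p) \<and>
     (\<forall>\<delta>::real. 0 < \<delta> \<longrightarrow> \<delta> < 1 \<longrightarrow>
        (\<forall>i\<in>{1..n}. c1 * (1 - \<delta>) ^ i \<le> lam i \<and> lam i \<le> c2 * (1 - \<delta>) ^ i) \<longrightarrow>
        kDPP_expect A k (Er A) / OPT A lam k \<le> c * (c2 / c1) * (1 + \<delta> * real k)))"
proof (intro exI[of _ 100] allI impI conjI)
  fix m n :: nat and A :: "real mat" and lam :: "nat \<Rightarrow> real" and c1 c2 :: real and k :: nat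
  assume A: "A \<in> carrier_mat m n" and se: "is_sorted_eigs A lam" and c1: "0 < c1" and c12: "c1 \<le> c2"
    and k1: "1 \<le> k" and kn1: "k \<le> n - 1"
  have kn: "k < n" using k1 kn1 by linarith
  let ?R = "kDPP_expect A k (Er A) / OPT A lam k"
  have g1: "1 \<le> c2 / c1" using c1 c12 by simp
  {
    fix p :: real
    assume p: "p > 1" and bnd: "\<forall>i\<in>{1..n}. c1 * real i powr (-p) \<le> lam i \<and> lam i \<le> c2 * real i powr (-p)"
    have bnd': "\<And>i. 1 \<le> i \<Longrightarrow> i \<le> n \<Longrightarrow> c1 * real i powr (-p) \<le> lam i \<and> lam i \<le> c2 * real i powr (-p)"
      using bnd by auto
    have pos: "\<And>i. 1 \<le> i \<Longrightarrow> i \<le> n \<Longrightarrow> 0 < lam i"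
    proof -
      fix i assume "1 \<le> i" "i \<le> n"
      then have "c1 * real i powr (-p) \<le> lam i" and "0 < c1 * real i powr (-p)" using bnd' c1 by auto
      then show "0 < lam i" by linarith
    qed
    have posa: "\<forall>i. 1 \<le> i \<longrightarrow> i \<le> n \<longrightarrow> 0 < lam i" using pos by blast
    note MB = main_bounds[OF A se posa kn]
    show "?R \<le> 100 * (c2 / c1) * p"
    proof (cases "real k < 2 * p")
      case True
      have "?R \<le> real (Suc k)" by (rule MB(1))
      also have "\<dots> \<le> 3 * p" using True p by simp
      also have "3 * p \<le> 100 * (c2 / c1) * p"
      proof -
        have "1 * p \<le> (c2 / c1) * p" by (rule mult_right_mono) (use g1 p in auto)
        then show ?thesis using p by linarith
      qed
      finally show ?thesis .
    next
      case False
      then have k2p: "2 * p \<le> real k" by simp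
      define x where "x = real k / (2 * p)"
      have x1: "1 \<le> x" unfolding x_def using k2p p by simp
      define w where "w = nat \<lfloor>x\<rfloor>"
      have wx: "real w \<le> x" unfolding w_def using x1 by simp
      have xw: "x < real w + 1" unfolding w_def using x1 by linarith
      have w1: "1 \<le> w" unfolding w_def using x1 by linarith
      have xk: "x \<le> real k / 2"
      proof -
        have "real k / (2 * p) \<le> real k / (2 * 1)" by (rule divide_left_mono) (use p in auto)
        then show ?thesis unfolding x_def by simp
      qed
      have wk: "w \<le> k" using wx xk by linarith
      have wp: "real w * (p + 1) \<le> real k"
      proof -
        have "real w * (p + 1) \<le> x * (p + 1)" using wx p by (intro mult_right_mono) auto
        also have "x * (p + 1) = real k * ((p + 1) / (2 * p))" unfolding x_def by simp
        also have "\<dots> \<le> real k * 1" using p by (intro mult_left_mono) auto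
        finally show ?thesis by simp
      qed
      have rho: "lam (Suc (k - w)) / lam (Suc (k + min (n-k) w - 1)) \<le> c2 / c1 * exp 2"
        by (rule poly_ratio[OF p c1 c12 bnd' w1 wk kn wp])
      have "?R \<le> real (Suc k) / real (w + 1) * (1 + c2 / c1 * exp 2)"
        by (rule MB(2)[OF w1 wk rho])
      also have "\<dots> \<le> (3 * p) * (10 * (c2 / c1))"
      proof (rule mult_mono)
        have "real (Suc k) \<le> 3 * p * real (w + 1)"
        proof -
          have "real k = 2 * p * x" unfolding x_def using p by simp
          also have "\<dots> \<le> 2 * p * (real w + 1)" using xw p by simp
          finally have "real k \<le> 2 * p * (real w + 1)" .
          moreover have "1 * 1 \<le> p * (real w + 1)" using p w1 by (intro mult_mono) auto
          moreover have "3 * p * real (w + 1) = 2 * p * (real w + 1) + p * (real w + 1)" by (simp add: algebra_simps)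
          moreover have "real (Suc k) = real k + 1" by simp
          ultimately show ?thesis by linarith
        qed
        then show "real (Suc k) / real (w + 1) \<le> 3 * p" by (simp add: divide_le_eq)
        have "c2 / c1 * exp 2 \<le> c2 / c1 * 9" using exp2_le g1 by (intro mult_left_mono) auto
        then show "1 + c2 / c1 * exp 2 \<le> 10 * (c2 / c1)" using g1 by linarith
        show "0 \<le> 3 * p" using p by simp
        have "0 \<le> c2 / c1 * exp 2" using g1 by (intro mult_nonneg_nonneg) auto
        then show "0 \<le> 1 + c2 / c1 * exp 2" by linarith
      qed
      also have "\<dots> \<le> 100 * (c2 / c1) * p"
      proof -
        have "0 \<le> p * (c2 / c1)" using g1 p by (intro mult_nonneg_nonneg) auto
        moreover have "3 * p * (10 * (c2 / c1)) = 30 * (p * (c2 / c1))" by simp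
        moreover have "100 * (c2 / c1) * p = 100 * (p * (c2 / c1))" by simp
        ultimately show ?thesis by linarith
      qed
      finally show ?thesis .
    qed
  }
  {
    fix \<delta> :: real
    assume d0: "0 < \<delta>" and d1: "\<delta> < 1" and bnd: "\<forall>i\<in>{1..n}. c1 * (1 - \<delta>) ^ i \<le> lam i \<and> lam i \<le> c2 * (1 - \<delta>) ^ i"
    have bnd': "\<And>i. 1 \<le> i \<Longrightarrow> i \<le> n \<Longrightarrow> c1 * (1 - \<delta>) ^ i \<le> lam i \<and> lam i \<le> c2 * (1 - \<delta>) ^ i"
      using bnd by auto
    have pos: "\<And>i. 1 \<le> i \<Longrightarrow> i \<le> n \<Longrightarrow> 0 < lam i"
    proof -
      fix i assume "1 \<le> i" "i \<le> n"
      then have "c1 * (1 - \<delta>) ^ i \<le> lam i" and "0 < c1 * (1 - \<delta>) ^ i" using bnd' c1 d1 by auto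
      then show "0 < lam i" by linarith
    qed
    have posa: "\<forall>i. 1 \<le> i \<longrightarrow> i \<le> n \<longrightarrow> 0 < lam i" using pos by blast
    note MB = main_bounds[OF A se posa kn]
    have dk: "0 \<le> \<delta> * real k" using d0 by simp
    show "?R \<le> 100 * (c2 / c1) * (1 + \<delta> * real k)"
    proof (cases "1/2 \<le> \<delta>")
      case True
      have "?R \<le> real (Suc k)" by (rule MB(1))
      also have "\<dots> \<le> 2 * (1 + \<delta> * real k)"
      proof -
        have "1 * real k \<le> (2 * \<delta>) * real k" using True by (intro mult_right_mono) auto
        then have "real k \<le> 2 * (\<delta> * real k)" by simp
        then show ?thesis by simp
      qed
      also have "\<dots> \<le> 100 * (c2 / c1) * (1 + \<delta> * real k)"
        using g1 dk by (intro mult_right_mono) auto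
      finally show ?thesis .
    next
      case False
      then have dh: "\<delta> < 1/2" by simp
      define y where "y = 1 / \<delta>"
      have y2: "2 < y" unfolding y_def using d0 dh by (simp add: field_simps)
      define w where "w = min k (nat \<lfloor>y\<rfloor>)"
      have fy: "1 \<le> nat \<lfloor>y\<rfloor>" using y2 by linarith
      have w1: "1 \<le> w" unfolding w_def using k1 fy by simp
      have wk: "w \<le> k" unfolding w_def by simp
      have wy: "real w \<le> y"
      proof -
        have "w \<le> nat \<lfloor>y\<rfloor>" unfolding w_def by simp
        then have "real w \<le> real (nat \<lfloor>y\<rfloor>)" by simp
        also have "real (nat \<lfloor>y\<rfloor>) = real_of_int \<lfloor>y\<rfloor>" using y2 by simp
        also have "\<dots> \<le> y" by (rule of_int_floor_le)
        finally show ?thesis .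
      qed
      have wd: "real w * \<delta> \<le> 1" using wy d0 unfolding y_def by (simp add: field_simps)
      have rho: "lam (Suc (k - w)) / lam (Suc (k + min (n-k) w - 1)) \<le> c2 / c1 * exp 4"
        by (rule exp_ratio[OF d0 dh c1 c12 bnd' w1 wk kn wd])
      have "?R \<le> real (Suc k) / real (w + 1) * (1 + c2 / c1 * exp 4)"
        by (rule MB(2)[OF w1 wk rho])
      also have "\<dots> \<le> (1 + \<delta> * real k) * (82 * (c2 / c1))"
      proof (rule mult_mono)
        have "real (Suc k) \<le> (1 + \<delta> * real k) * real (w + 1)"
        proof (cases "w = k")
          case True
          have h: "0 \<le> (\<delta> * real k) * real (w + 1)" using dk by simp
          have "(1 + \<delta> * real k) * real (w + 1) = real (w + 1) + (\<delta> * real k) * real (w + 1)"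
            by (simp add: algebra_simps)
          then show ?thesis using True h by linarith
        next
          case False
          then have "w = nat \<lfloor>y\<rfloor>" unfolding w_def by linarith
          then have "y < real w + 1" using y2 by linarith
          then have dw: "1 \<le> \<delta> * (real w + 1)" using d0 unfolding y_def by (simp add: field_simps)
          have "real k * 1 \<le> real k * (\<delta> * (real w + 1))" using dw by (intro mult_left_mono) auto
          moreover have "real k * (\<delta> * (real w + 1)) = \<delta> * real k * (real w + 1)" by simp
          moreover have "(1 + \<delta> * real k) * real (w + 1) = real w + 1 + \<delta> * real k * (real w + 1)"
            by (simp add: algebra_simps)
          moreover have "real (Suc k) = real k + 1" by simp
          ultimately show ?thesis by linarith
        qed
        then show "real (Suc k) / real (w + 1) \<le> 1 + \<delta> * real k" by (simp add: divide_le_eq)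
        have "c2 / c1 * exp 4 \<le> c2 / c1 * 81" using exp4_le g1 by (intro mult_left_mono) auto
        then show "1 + c2 / c1 * exp 4 \<le> 82 * (c2 / c1)" using g1 by linarith
        show "0 \<le> 1 + \<delta> * real k" using dk by simp
        have "0 \<le> c2 / c1 * exp 4" using g1 by (intro mult_nonneg_nonneg) auto
        then show "0 \<le> 1 + c2 / c1 * exp 4" by linarith
      qed
      also have "\<dots> \<le> 100 * (c2 / c1) * (1 + \<delta> * real k)"
      proof -
        have "0 \<le> (c2 / c1) * (1 + \<delta> * real k)" using g1 dk by (intro mult_nonneg_nonneg) auto
        moreover have "(1 + \<delta> * real k) * (82 * (c2 / c1)) = 82 * ((c2 / c1) * (1 + \<delta> * real k))" by simp
        moreover have "100 * (c2 / c1) * (1 + \<delta> * real k) = 100 * ((c2 / c1) * (1 + \<delta> * real k))" by simp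
        ultimately show ?thesis by linarith
      qed
      finally show ?thesis .
    qed
  }
qed


end
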